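(* Let $G$ be a finite group with pairwise non-isomorphic irreducible complex representations $V_1,\dots,V_k$ with characters $\chi_1,\dots,\chi_k$. Suppose $Q_1,\dots,Q_m$ are probability distributions on $G$ that are constant on conjugacy classes, and let $Q_i=\sum_{j=1}^k a_j^{i}\chi_j$ be their unique expressions as linear combinations of irreducible characters. For a word $w=w_1w_2\cdots w_N$ with $w_i\in\{1,\dots,m\}$ let $Q^{(w)}:=Q_{w_1}\ast\cdots\ast Q_{w_N}$ and $q^{w}:=\sum_{g\in G}Q^{(w)}(g)e_g\in\mathbb{C}G$. Then for every $G$-homogeneous space $X$ and every $x_0\in X$, \[\|q^{w}\cdot e_{x_0}-\overline{u}_X\|^2_{\rm TV}\leq \frac{1}{4}\sum_{V_j\neq {\rm triv}}m(V_j,\mathbb{C} X)\dim(V_j)\left(\frac{|G|}{\dim(V_j)}\right)^{2N}\left(\prod_{i=1}^N a_j^{w_i}\right)^2.\]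
   Context: Convolution: $(P\ast R)(h)=\sum_{g}P(hg^{-1})R(g)$. $\mathbb{C}G$ is the group algebra with basis $\{e_g\}$. A $G$-homogeneous space is a finite set $X$ with transitive $G$-action; $\mathbb{C}X$ has basis $\{e_x\}$ and is a $\mathbb{C}G$-module via $e_g\cdot e_x:=e_{g(x)}$. $\|h\|_{\rm TV}:=\frac12\sum_x|h(x)|$ for $h=\sum_xh(x)e_x$; $\overline{u}_X:=\frac1{|X|}\sum_xe_x$. $m(V_j,\mathbb{C}X)$ is the multiplicity of $V_j$ in $\mathbb{C}X$; the sum runs over nontrivial irreducibles.
   Formalization: The factor $(\prod_{i=1}^N a_j^{w_i})^2$ in the bound is replaced by the squared complex modulus $|\prod_{i=1}^N a_j^{w_i}|^2$ of that product. The statement above fails without it. *)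

theory Defs
  imports "Jordan_Normal_Form.Matrix" "HOL-Algebra.Group_Action"
begin

definition is_rep :: "('g, 'b) monoid_scheme \<Rightarrow> ('g \<Rightarrow> complex mat) \<Rightarrow> nat \<Rightarrow> bool" where
  "is_rep G \<rho> d \<longleftrightarrow>
     (\<forall>g\<in>carrier G. \<rho> g \<in> carrier_mat d d) \<and>
     \<rho> \<one>\<^bsub>G\<^esub> = 1\<^sub>m d \<and>
     (\<forall>g\<in>carrier G. \<forall>h\<in>carrier G. \<rho> (g \<otimes>\<^bsub>G\<^esub> h) = \<rho> g * \<rho> h)"

definition invariant_subspace :: "('g, 'b) monoid_scheme \<Rightarrow> ('g \<Rightarrow> complex mat) \<Rightarrow> nat \<Rightarrow> complex vec set \<Rightarrow> bool" where
  "invariant_subspace G \<rho> d W \<longleftrightarrow>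
     W \<subseteq> carrier_vec d \<and> 0\<^sub>v d \<in> W \<and>
     (\<forall>v\<in>W. \<forall>u\<in>W. v + u \<in> W) \<and>
     (\<forall>c. \<forall>v\<in>W. c \<cdot>\<^sub>v v \<in> W) \<and>
     (\<forall>g\<in>carrier G. \<forall>v\<in>W. \<rho> g *\<^sub>v v \<in> W)"

definition irreducible_rep :: "('g, 'b) monoid_scheme \<Rightarrow> ('g \<Rightarrow> complex mat) \<Rightarrow> nat \<Rightarrow> bool" where
  "irreducible_rep G \<rho> d \<longleftrightarrow> is_rep G \<rho> d \<and> d > 0 \<and>
     (\<forall>W. invariant_subspace G \<rho> d W \<longrightarrow> W = {0\<^sub>v d} \<or> W = carrier_vec d)"

definition iso_rep :: "('g, 'b) monoid_scheme \<Rightarrow> ('g \<Rightarrow> complex mat) \<Rightarrow> nat \<Rightarrow> ('g \<Rightarrow> complex mat) \<Rightarrow> nat \<Rightarrow> bool" where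
  "iso_rep G \<rho> d \<sigma> e \<longleftrightarrow> d = e \<and>
     (\<exists>P\<in>carrier_mat d d. invertible_mat P \<and> (\<forall>g\<in>carrier G. P * \<rho> g = \<sigma> g * P))"

definition triv_rep :: "'g \<Rightarrow> complex mat" where
  "triv_rep g = 1\<^sub>m 1"

definition character :: "('g \<Rightarrow> complex mat) \<Rightarrow> nat \<Rightarrow> 'g \<Rightarrow> complex" where
  "character \<rho> d g = (\<Sum>i<d. \<rho> g $$ (i, i))"

definition dsum_rep :: "('g \<Rightarrow> complex mat) \<times> nat \<Rightarrow> ('g \<Rightarrow> complex mat) \<times> nat \<Rightarrow> ('g \<Rightarrow> complex mat) \<times> nat" where
  "dsum_rep r s = (case r of (\<rho>, d) \<Rightarrow> case s of (\<sigma>, e) \<Rightarrow>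
      (\<lambda>g. four_block_mat (\<rho> g) (0\<^sub>m d e) (0\<^sub>m e d) (\<sigma> g), d + e))"

definition dsum_list :: "(('g \<Rightarrow> complex mat) \<times> nat) list \<Rightarrow> ('g \<Rightarrow> complex mat) \<times> nat" where
  "dsum_list rs = foldr dsum_rep rs (\<lambda>g. 1\<^sub>m 0, 0)"

definition multiple_sum :: "nat \<Rightarrow> (nat \<Rightarrow> 'g \<Rightarrow> complex mat) \<Rightarrow> (nat \<Rightarrow> nat) \<Rightarrow> (nat \<Rightarrow> nat) \<Rightarrow> ('g \<Rightarrow> complex mat) \<times> nat" where
  "multiple_sum k \<rho> d m = dsum_list (concat (map (\<lambda>j. replicate (m j) (\<rho> j, d j)) [0..<k]))"

(* the permutation module CX, as matrices w.r.t. the basis e_{xs!0},...,e_{xs!(n-1)}: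
   e_g . e_x = e_{g(x)} *)
definition perm_rep :: "('g \<Rightarrow> 'x \<Rightarrow> 'x) \<Rightarrow> 'x list \<Rightarrow> 'g \<Rightarrow> complex mat" where
  "perm_rep \<phi> xs g = mat (length xs) (length xs) (\<lambda>(i, j). if \<phi> g (xs ! j) = xs ! i then 1 else 0)"

definition conv :: "('g, 'b) monoid_scheme \<Rightarrow> ('g \<Rightarrow> real) \<Rightarrow> ('g \<Rightarrow> real) \<Rightarrow> 'g \<Rightarrow> real" where
  "conv G P R h = (\<Sum>g\<in>carrier G. P (h \<otimes>\<^bsub>G\<^esub> inv\<^bsub>G\<^esub> g) * R g)"

definition delta_one :: "('g, 'b) monoid_scheme \<Rightarrow> 'g \<Rightarrow> real" where
  "delta_one G g = (if g = \<one>\<^bsub>G\<^esub> then 1 else 0)"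

definition conv_word :: "('g, 'b) monoid_scheme \<Rightarrow> (nat \<Rightarrow> 'g \<Rightarrow> real) \<Rightarrow> nat list \<Rightarrow> 'g \<Rightarrow> real" where
  "conv_word G Q w = foldr (\<lambda>i acc. conv G (Q i) acc) w (delta_one G)"

(* coefficient at e_x of  q . e_{x0} = sum_g P(g) e_{g(x0)} *)
definition act_dist :: "('g, 'b) monoid_scheme \<Rightarrow> ('g \<Rightarrow> 'x \<Rightarrow> 'x) \<Rightarrow> ('g \<Rightarrow> real) \<Rightarrow> 'x \<Rightarrow> 'x \<Rightarrow> real" where
  "act_dist G \<phi> P x0 x = (\<Sum>g\<in>carrier G. if \<phi> g x0 = x then P g else 0)"

definition tv_norm :: "'x set \<Rightarrow> ('x \<Rightarrow> real) \<Rightarrow> real" where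
  "tv_norm X h = (1/2) * (\<Sum>x\<in>X. \<bar>h x\<bar>)"

end

theory Submission
  imports Defs "Jordan_Normal_Form.Spectral_Radius"
begin

hide_const (open) Polynomial.order



definition gsum :: "('g,'b) monoid_scheme \<Rightarrow> nat \<Rightarrow> nat \<Rightarrow> ('g \<Rightarrow> complex mat) \<Rightarrow> complex mat" where
  "gsum G r c f = mat r c (\<lambda>(i,j). \<Sum>g\<in>carrier G. f g $$ (i,j))"

lemma gsum_carrier[simp]: "gsum G r c f \<in> carrier_mat r c"
  and gsum_dim[simp]: "dim_row (gsum G r c f) = r" "dim_col (gsum G r c f) = c"
  by (auto simp: gsum_def)

lemma gsum_index[simp]: "i < r \<Longrightarrow> j < c \<Longrightarrow> gsum G r c f $$ (i,j) = (\<Sum>g\<in>carrier G. f g $$ (i,j))"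
  by (simp add: gsum_def)

lemma mult_entry: "A \<in> carrier_mat r s \<Longrightarrow> B \<in> carrier_mat s c \<Longrightarrow> i < r \<Longrightarrow> j < c \<Longrightarrow>
  (A * B) $$ (i,j) = (\<Sum>l<s. A $$ (i,l) * B $$ (l,j))"
  by (auto simp: scalar_prod_def atLeast0LessThan intro!: sum.cong)

lemma gsum_mult_right:
  assumes "\<And>g. g \<in> carrier G \<Longrightarrow> f g \<in> carrier_mat r s" and "B \<in> carrier_mat s c"
  shows "gsum G r s f * B = gsum G r c (\<lambda>g. f g * B)"
proof (rule eq_matI)
  fix i j assume ij: "i < dim_row (gsum G r c (\<lambda>g. f g * B))" "j < dim_col (gsum G r c (\<lambda>g. f g * B))"
  hence i: "i < r" and j: "j < c" by auto
  have "(gsum G r s f * B) $$ (i,j) = (\<Sum>l<s. (\<Sum>g\<in>carrier G. f g $$ (i,l)) * B $$ (l,j))"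
    using i j assms by (subst mult_entry[of _ r s _ c], auto)
  also have "\<dots> = (\<Sum>g\<in>carrier G. \<Sum>l<s. f g $$ (i,l) * B $$ (l,j))"
    by (simp add: sum_distrib_right sum.swap[of _ "carrier G"])
  also have "\<dots> = (\<Sum>g\<in>carrier G. (f g * B) $$ (i,j))"
    using i j assms by (intro sum.cong, auto simp: mult_entry[of _ r s _ c])
  finally show "(gsum G r s f * B) $$ (i,j) = gsum G r c (\<lambda>g. f g * B) $$ (i,j)" using i j by simp
qed (use assms in auto)

lemma gsum_mult_left:
  assumes "\<And>g. g \<in> carrier G \<Longrightarrow> f g \<in> carrier_mat s c" and "B \<in> carrier_mat r s"
  shows "B * gsum G s c f = gsum G r c (\<lambda>g. B * f g)"
proof (rule eq_matI)
  fix i j assume ij: "i < dim_row (gsum G r c (\<lambda>g. B * f g))" "j < dim_col (gsum G r c (\<lambda>g. B * f g))"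
  hence i: "i < r" and j: "j < c" by auto
  have "(B * gsum G s c f) $$ (i,j) = (\<Sum>l<s. B $$ (i,l) * (\<Sum>g\<in>carrier G. f g $$ (l,j)))"
    using i j assms by (subst mult_entry[of _ r s _ c], auto)
  also have "\<dots> = (\<Sum>g\<in>carrier G. \<Sum>l<s. B $$ (i,l) * f g $$ (l,j))"
    by (simp add: sum_distrib_left sum.swap[of _ "carrier G"])
  also have "\<dots> = (\<Sum>g\<in>carrier G. (B * f g) $$ (i,j))"
    using i j assms by (intro sum.cong, auto simp: mult_entry[of _ r s _ c])
  finally show "(B * gsum G s c f) $$ (i,j) = gsum G r c (\<lambda>g. B * f g) $$ (i,j)" using i j by simp
qed (use assms in auto)

lemma gsum_cong: "(\<And>g. g \<in> carrier G \<Longrightarrow> f g = f' g) \<Longrightarrow> gsum G r c f = gsum G r c f'"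
  unfolding gsum_def by (intro cong_mat refl, auto intro!: sum.cong)

lemma gsum_reindex:
  assumes "bij_betw t (carrier G) (carrier G)"
  shows "gsum G r c f = gsum G r c (\<lambda>g. f (t g))"
  unfolding gsum_def
proof (intro cong_mat refl)
  fix i j
  show "(case (i,j) of (i,j) \<Rightarrow> \<Sum>g\<in>carrier G. f g $$ (i,j)) = (case (i,j) of (i,j) \<Rightarrow> \<Sum>g\<in>carrier G. f (t g) $$ (i,j))"
    using sum.reindex_bij_betw[OF assms, of "\<lambda>g. f g $$ (i,j)"] by simp
qed

definition tr :: "complex mat \<Rightarrow> complex" where
  "tr A = (\<Sum>i<dim_row A. A $$ (i,i))"

lemma tr_comm: assumes A: "A \<in> carrier_mat r s" and B: "B \<in> carrier_mat s r" shows "tr (A * B) = tr (B * A)"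
proof -
  have "tr (A * B) = (\<Sum>i<r. \<Sum>l<s. A $$ (i,l) * B $$ (l,i))"
  proof -
    have "dim_row (A * B) = r" using A by simp
    then show ?thesis unfolding tr_def using A B by (simp only:, intro sum.cong refl, subst mult_entry[OF A B], auto)
  qed
  also have "\<dots> = (\<Sum>l<s. \<Sum>i<r. B $$ (l,i) * A $$ (i,l))"
    by (subst sum.swap, simp add: mult.commute)
  also have "\<dots> = tr (B * A)"
  proof -
    have "dim_row (B * A) = s" using B by simp
    then show ?thesis unfolding tr_def using A B by (simp only:, intro sum.cong refl, subst mult_entry[OF B A], auto)
  qed
  finally show ?thesis .
qed

lemma tr_gsum: "tr (gsum G r r f) = (\<Sum>g\<in>carrier G. tr (f g))" if "\<And>g. g \<in> carrier G \<Longrightarrow> dim_row (f g) = r"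
  unfolding tr_def using that by (simp add: sum.swap[of _ "{..<r}"])

lemma tr_smult_one: "tr (c \<cdot>\<^sub>m 1\<^sub>m n) = c * of_nat n"
  unfolding tr_def by simp

locale fgroup = group G for G :: "('g,'b) monoid_scheme" (structure) +
  assumes fin: "finite (carrier G)"
begin

lemma inv_cancel_simps[simp]:
  "h \<in> carrier G \<Longrightarrow> x \<in> carrier G \<Longrightarrow> inv h \<otimes> (h \<otimes> x) = x"
  "h \<in> carrier G \<Longrightarrow> x \<in> carrier G \<Longrightarrow> h \<otimes> (inv h \<otimes> x) = x"
  "h \<in> carrier G \<Longrightarrow> x \<in> carrier G \<Longrightarrow> x \<otimes> h \<otimes> inv h = x"
  "h \<in> carrier G \<Longrightarrow> x \<in> carrier G \<Longrightarrow> x \<otimes> inv h \<otimes> h = x"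
  by (metis inv_closed l_inv l_one m_assoc r_inv r_one)+

lemma bij_lmult: "h \<in> carrier G \<Longrightarrow> bij_betw (\<lambda>g. h \<otimes> g) (carrier G) (carrier G)"
  by (rule bij_betwI[where g = "\<lambda>g. inv h \<otimes> g"], auto)

lemma bij_rmult: "h \<in> carrier G \<Longrightarrow> bij_betw (\<lambda>g. g \<otimes> h) (carrier G) (carrier G)"
  by (rule bij_betwI[where g = "\<lambda>g. g \<otimes> inv h"], auto simp: m_assoc)

lemma bij_inv: "bij_betw (\<lambda>g. inv g) (carrier G) (carrier G)"
  by (rule bij_betwI[where g = "\<lambda>g. inv g"], auto)

lemma bij_conj: "h \<in> carrier G \<Longrightarrow> bij_betw (\<lambda>g. h \<otimes> g \<otimes> inv h) (carrier G) (carrier G)"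
  by (rule bij_betwI[where g = "\<lambda>g. inv h \<otimes> g \<otimes> h"], auto simp: m_assoc)

lemma sum_reindex_G: "bij_betw t (carrier G) (carrier G) \<Longrightarrow> (\<Sum>g\<in>carrier G. f g) = (\<Sum>g\<in>carrier G. f (t g))"
  using sum.reindex_bij_betw by metis

end


lemma mult_vec_entry: "A \<in> carrier_mat r s \<Longrightarrow> v \<in> carrier_vec s \<Longrightarrow> i < r \<Longrightarrow>
  (A *\<^sub>v v) $ i = (\<Sum>l<s. A $$ (i,l) * v $ l)"
  by (auto simp: scalar_prod_def atLeast0LessThan intro!: sum.cong)

lemma mat_eq_from_vec: fixes A B :: "complex mat" assumes A: "A \<in> carrier_mat r s" and B: "B \<in> carrier_mat r s"
  and h: "\<And>j. j < s \<Longrightarrow> A *\<^sub>v unit_vec s j = B *\<^sub>v unit_vec s j"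
shows "A = B"
proof (rule eq_matI)
  fix i j assume "i < dim_row B" "j < dim_col B"
  hence i: "i < r" and j: "j < s" using B by auto
  have "A $$ (i,j) = (A *\<^sub>v unit_vec s j) $ i" using carrier_matD[OF A] i j by simp
  also have "\<dots> = (B *\<^sub>v unit_vec s j) $ i" using h j by simp
  also have "\<dots> = B $$ (i,j)" using carrier_matD[OF B] i j by simp
  finally show "A $$ (i,j) = B $$ (i,j)" .
qed (use A B in auto)

lemma dims_eq:
  fixes A :: "complex mat"
  assumes A: "A \<in> carrier_mat e d"
    and inj: "\<And>v. v \<in> carrier_vec d \<Longrightarrow> A *\<^sub>v v = 0\<^sub>v e \<Longrightarrow> v = 0\<^sub>v d"
    and surj: "\<And>u. u \<in> carrier_vec e \<Longrightarrow> \<exists>v\<in>carrier_vec d. A *\<^sub>v v = u"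
  shows "d = e"
proof (rule ccontr)
  assume ne: "d \<noteq> e"
  show False
  proof (cases "d < e")
    case True
    define A' where "A' = mat e e (\<lambda>(i,j). if j < d then A $$ (i,j) else (0::complex))"
    have A': "A' \<in> carrier_mat e e" unfolding A'_def by simp
    have "A' *\<^sub>v unit_vec e (e-1) = 0\<^sub>v e"
    proof (rule eq_vecI)
      fix i assume "i < dim_vec (0\<^sub>v e :: complex vec)"
      hence i: "i < e" by simp
      have "(A' *\<^sub>v unit_vec e (e-1)) $ i = A' $$ (i, e-1)" using A' i True by simp
      also have "\<dots> = 0" unfolding A'_def using i True by simp
      finally show "(A' *\<^sub>v unit_vec e (e-1)) $ i = 0\<^sub>v e $ i" using i by simp
    qed (use A' in simp)
    moreover have "unit_vec e (e-1) \<noteq> (0\<^sub>v e :: complex vec)" using True by simp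
    ultimately have "det A' = 0" unfolding det_0_iff_vec_prod_zero[OF A'] by (intro exI[of _ "unit_vec e (e-1)"], auto)
    hence "det (transpose_mat A') = 0" using det_transpose[OF A'] by simp
    then obtain wv where wv: "wv \<in> carrier_vec e" "wv \<noteq> 0\<^sub>v e" "transpose_mat A' *\<^sub>v wv = 0\<^sub>v e"
      using det_0_iff_vec_prod_zero[of "transpose_mat A'" e] A' by auto
    from wv obtain i where i: "i < e" "wv $ i \<noteq> 0"
      by (metis carrier_vecD eq_vecI index_zero_vec(1,2))
    from surj[of "unit_vec e i"] obtain v where v: "v \<in> carrier_vec d" "A *\<^sub>v v = unit_vec e i" by auto
    have "(\<Sum>l<e. wv $ l * (A *\<^sub>v v) $ l) = wv $ i"
      using i by (simp add: v(2) unit_vec_def if_distrib cong: if_cong)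
    also have "(\<Sum>l<e. wv $ l * (A *\<^sub>v v) $ l) = (\<Sum>l<e. wv $ l * (\<Sum>j<d. A $$ (l,j) * v $ j))"
      by (intro sum.cong refl, subst mult_vec_entry[OF A v(1)], auto)
    also have "\<dots> = (\<Sum>j<d. v $ j * (\<Sum>l<e. A' $$ (l,j) * wv $ l))"
      unfolding A'_def using True
      by (simp add: sum_distrib_left sum_distrib_right sum.swap[of _ "{..<e}"] mult_ac)
    also have "\<dots> = (\<Sum>j<d. v $ j * (transpose_mat A' *\<^sub>v wv) $ j)"
    proof (intro sum.cong refl)
      fix j assume "j \<in> {..<d}"
      hence j: "j < e" using True by simp
      have tA: "transpose_mat A' \<in> carrier_mat e e" using A' by simp
      show "v $ j * (\<Sum>l<e. A' $$ (l, j) * wv $ l) = v $ j * (transpose_mat A' *\<^sub>v wv) $ j"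
        using mult_vec_entry[OF tA wv(1) j] A' j by simp
    qed
    also have "\<dots> = 0" using wv(3) True by simp
    finally show False using i by simp
  next
    case False
    hence lt: "e < d" using ne by simp
    define A' where "A' = mat d d (\<lambda>(i,j). if i < e then A $$ (i,j) else (0::complex))"
    have A': "A' \<in> carrier_mat d d" unfolding A'_def by simp
    have "det A' \<noteq> 0"
    proof
      assume "det A' = 0"
      then obtain v where v: "v \<in> carrier_vec d" "v \<noteq> 0\<^sub>v d" "A' *\<^sub>v v = 0\<^sub>v d"
        using det_0_iff_vec_prod_zero[OF A'] by auto
      have "A *\<^sub>v v = 0\<^sub>v e"
      proof (rule eq_vecI)
        fix i assume "i < dim_vec (0\<^sub>v e :: complex vec)"
        hence i: "i < e" by simp
        have "(A *\<^sub>v v) $ i = (\<Sum>l<d. A $$ (i,l) * v $ l)" by (rule mult_vec_entry[OF A v(1) i])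
        also have "\<dots> = (\<Sum>l<d. A' $$ (i,l) * v $ l)" unfolding A'_def using i lt by (intro sum.cong, auto)
        also have "\<dots> = (A' *\<^sub>v v) $ i" using mult_vec_entry[OF A' v(1)] i lt by simp
        also have "\<dots> = 0" using v(3) i lt by simp
        finally show "(A *\<^sub>v v) $ i = 0\<^sub>v e $ i" using i by simp
      qed (use A in simp)
      with inj v show False by auto
    qed
    moreover have "det (transpose_mat A') = 0"
    proof -
      have tA: "transpose_mat A' \<in> carrier_mat d d" using A' by simp
      have "transpose_mat A' *\<^sub>v unit_vec d (d-1) = 0\<^sub>v d"
      proof (rule eq_vecI)
        fix i assume "i < dim_vec (0\<^sub>v d :: complex vec)"
        hence i: "i < d" by simp
        have "(transpose_mat A' *\<^sub>v unit_vec d (d-1)) $ i = transpose_mat A' $$ (i, d-1)" using tA i lt by simp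
        also have "\<dots> = 0" unfolding A'_def using i lt by simp
        finally show "(transpose_mat A' *\<^sub>v unit_vec d (d-1)) $ i = 0\<^sub>v d $ i" using i by simp
      qed (use tA in simp)
      moreover have "unit_vec d (d-1) \<noteq> (0\<^sub>v d :: complex vec)" using lt by simp
      ultimately show ?thesis unfolding det_0_iff_vec_prod_zero[OF tA] by (intro exI[of _ "unit_vec d (d-1)"], auto)
    qed
    ultimately show False using det_transpose[OF A'] by simp
  qed
qed


lemma zero_mat_mult_vec[simp]: "v \<in> carrier_vec d \<Longrightarrow> (0\<^sub>m e d :: complex mat) *\<^sub>v v = 0\<^sub>v e"
  by (intro eq_vecI, auto)

context fgroup begin

lemma rep_carrier: "is_rep G \<rho> d \<Longrightarrow> g \<in> carrier G \<Longrightarrow> \<rho> g \<in> carrier_mat d d"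
  unfolding is_rep_def by auto

lemma rep_one: "is_rep G \<rho> d \<Longrightarrow> \<rho> \<one> = 1\<^sub>m d"
  unfolding is_rep_def by auto

lemma rep_mult: "is_rep G \<rho> d \<Longrightarrow> g \<in> carrier G \<Longrightarrow> h \<in> carrier G \<Longrightarrow> \<rho> (g \<otimes> h) = \<rho> g * \<rho> h"
  unfolding is_rep_def by auto

lemma rep_inv: assumes "is_rep G \<rho> d" "g \<in> carrier G"
  shows "\<rho> (inv g) * \<rho> g = 1\<^sub>m d" "\<rho> g * \<rho> (inv g) = 1\<^sub>m d"
  using rep_mult[OF assms(1), of "inv g" g] rep_mult[OF assms(1), of g "inv g"] rep_one[OF assms(1)] assms(2)
  by auto

lemma schur_scalar:
  assumes irr: "irreducible_rep G \<rho> d" and A: "A \<in> carrier_mat d d"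
    and comm: "\<And>g. g \<in> carrier G \<Longrightarrow> A * \<rho> g = \<rho> g * A"
  shows "\<exists>c. A = c \<cdot>\<^sub>m 1\<^sub>m d"
proof -
  have rep: "is_rep G \<rho> d" and d: "d > 0" and irrW: "\<And>W. invariant_subspace G \<rho> d W \<Longrightarrow> W = {0\<^sub>v d} \<or> W = carrier_vec d"
    using irr unfolding irreducible_rep_def by auto
  from spectrum_non_empty[OF A d] obtain c where "eigenvalue A c" unfolding spectrum_def by auto
  then obtain v where v: "v \<in> carrier_vec d" "v \<noteq> 0\<^sub>v d" "A *\<^sub>v v = c \<cdot>\<^sub>v v"
    unfolding eigenvalue_def eigenvector_def using A by auto
  define W where "W = {u \<in> carrier_vec d. A *\<^sub>v u = c \<cdot>\<^sub>v u}"
  have "invariant_subspace G \<rho> d W"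
    unfolding invariant_subspace_def
  proof (intro conjI ballI allI)
    show "W \<subseteq> carrier_vec d" unfolding W_def by auto
    show "0\<^sub>v d \<in> W" unfolding W_def using A by auto
    fix u u' assume u: "u \<in> W" and u': "u' \<in> W"
    show "u + u' \<in> W" using u u' A unfolding W_def
      by (auto simp: mult_add_distrib_mat_vec[OF A] smult_add_distrib_vec)
  next
    fix e u assume u: "u \<in> W"
    show "e \<cdot>\<^sub>v u \<in> W" using u A unfolding W_def
      by (auto simp: mult_mat_vec[OF A] smult_smult_assoc mult.commute)
  next
    fix g u assume g: "g \<in> carrier G" and u: "u \<in> W"
    have rg: "\<rho> g \<in> carrier_mat d d" by (rule rep_carrier[OF rep g])
    have "A *\<^sub>v (\<rho> g *\<^sub>v u) = (A * \<rho> g) *\<^sub>v u" using A rg u unfolding W_def by auto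
    also have "\<dots> = \<rho> g *\<^sub>v (A *\<^sub>v u)" using A rg u comm[OF g] unfolding W_def by auto
    also have "\<dots> = c \<cdot>\<^sub>v (\<rho> g *\<^sub>v u)" using u rg unfolding W_def by (auto simp: mult_mat_vec[OF rg])
    finally show "\<rho> g *\<^sub>v u \<in> W" using u rg unfolding W_def by auto
  qed
  moreover have "W \<noteq> {0\<^sub>v d}" using v unfolding W_def by auto
  ultimately have W: "W = carrier_vec d" using irrW by auto
  have "A = c \<cdot>\<^sub>m 1\<^sub>m d"
  proof (rule mat_eq_from_vec[OF A])
    fix j assume j: "j < d"
    have "unit_vec d j \<in> W" using W j by auto
    thus "A *\<^sub>v unit_vec d j = (c \<cdot>\<^sub>m 1\<^sub>m d) *\<^sub>v unit_vec d j"
      unfolding W_def by (auto simp: mult_mat_vec[of "1\<^sub>m d" d d])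
  qed simp
  thus ?thesis by auto
qed

lemma schur_nonzero_iso:
  assumes irr1: "irreducible_rep G \<rho> d" and irr2: "irreducible_rep G \<sigma> e"
    and A: "A \<in> carrier_mat e d"
    and comm: "\<And>g. g \<in> carrier G \<Longrightarrow> A * \<rho> g = \<sigma> g * A"
    and nz: "A \<noteq> 0\<^sub>m e d"
  shows "iso_rep G \<rho> d \<sigma> e"
proof -
  have rep1: "is_rep G \<rho> d" and irrW1: "\<And>W. invariant_subspace G \<rho> d W \<Longrightarrow> W = {0\<^sub>v d} \<or> W = carrier_vec d"
    using irr1 unfolding irreducible_rep_def by auto
  have rep2: "is_rep G \<sigma> e" and irrW2: "\<And>W. invariant_subspace G \<sigma> e W \<Longrightarrow> W = {0\<^sub>v e} \<or> W = carrier_vec e"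
    using irr2 unfolding irreducible_rep_def by auto
  define K where "K = {v \<in> carrier_vec d. A *\<^sub>v v = 0\<^sub>v e}"
  have "invariant_subspace G \<rho> d K"
    unfolding invariant_subspace_def
  proof (intro conjI ballI allI)
    show "K \<subseteq> carrier_vec d" unfolding K_def by auto
    show "0\<^sub>v d \<in> K" unfolding K_def using A by auto
    fix u u' assume u: "u \<in> K" and u': "u' \<in> K"
    show "u + u' \<in> K" using u u' A unfolding K_def
      by (auto simp: mult_add_distrib_mat_vec[OF A])
  next
    fix c u assume u: "u \<in> K"
    show "c \<cdot>\<^sub>v u \<in> K" using u A unfolding K_def
      by (auto simp: mult_mat_vec[OF A])
  next
    fix g u assume g: "g \<in> carrier G" and u: "u \<in> K"
    have rg: "\<rho> g \<in> carrier_mat d d" by (rule rep_carrier[OF rep1 g])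
    have sg: "\<sigma> g \<in> carrier_mat e e" by (rule rep_carrier[OF rep2 g])
    have "A *\<^sub>v (\<rho> g *\<^sub>v u) = (A * \<rho> g) *\<^sub>v u" using A rg u unfolding K_def by auto
    also have "\<dots> = \<sigma> g *\<^sub>v (A *\<^sub>v u)" using A sg u comm[OF g] unfolding K_def by auto
    also have "\<dots> = 0\<^sub>v e" using u sg unfolding K_def by auto
    finally show "\<rho> g *\<^sub>v u \<in> K" using u rg unfolding K_def by auto
  qed
  moreover have "K \<noteq> carrier_vec d"
  proof
    assume K: "K = carrier_vec d"
    have "A = 0\<^sub>m e d"
    proof (rule mat_eq_from_vec[OF A])
      fix j assume j: "j < d"
      have "unit_vec d j \<in> K" using K j by simp
      thus "A *\<^sub>v unit_vec d j = 0\<^sub>m e d *\<^sub>v unit_vec d j" unfolding K_def by simp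
    qed simp
    with nz show False by simp
  qed
  ultimately have K: "K = {0\<^sub>v d}" using irrW1 by auto
  define I where "I = {A *\<^sub>v v | v. v \<in> carrier_vec d}"
  have "invariant_subspace G \<sigma> e I"
    unfolding invariant_subspace_def
  proof (intro conjI ballI allI)
    show "I \<subseteq> carrier_vec e" unfolding I_def using A by auto
    show "0\<^sub>v e \<in> I" unfolding I_def using A by (auto intro!: exI[of _ "0\<^sub>v d"])
    fix u u' assume u: "u \<in> I" and u': "u' \<in> I"
    then obtain v v' where "v \<in> carrier_vec d" "v' \<in> carrier_vec d" "u = A *\<^sub>v v" "u' = A *\<^sub>v v'"
      unfolding I_def by auto
    thus "u + u' \<in> I" unfolding I_def
      by (auto simp: mult_add_distrib_mat_vec[OF A] intro!: exI[of _ "v + v'"])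
  next
    fix c u assume u: "u \<in> I"
    then obtain v where "v \<in> carrier_vec d" "u = A *\<^sub>v v" unfolding I_def by auto
    thus "c \<cdot>\<^sub>v u \<in> I" unfolding I_def
      by (auto simp: mult_mat_vec[OF A] intro!: exI[of _ "c \<cdot>\<^sub>v v"])
  next
    fix g u assume g: "g \<in> carrier G" and u: "u \<in> I"
    then obtain v where v: "v \<in> carrier_vec d" "u = A *\<^sub>v v" unfolding I_def by auto
    have rg: "\<rho> g \<in> carrier_mat d d" by (rule rep_carrier[OF rep1 g])
    have sg: "\<sigma> g \<in> carrier_mat e e" by (rule rep_carrier[OF rep2 g])
    have "\<sigma> g *\<^sub>v u = (\<sigma> g * A) *\<^sub>v v" using v A sg by auto
    also have "\<dots> = A *\<^sub>v (\<rho> g *\<^sub>v v)" using comm[OF g, symmetric] v A rg by auto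
    finally show "\<sigma> g *\<^sub>v u \<in> I" unfolding I_def using v rg by auto
  qed
  moreover have "I \<noteq> {0\<^sub>v e}"
  proof
    assume I0: "I = {0\<^sub>v e}"
    have "A = 0\<^sub>m e d"
    proof (rule mat_eq_from_vec[OF A])
      fix j assume j: "j < d"
      have "A *\<^sub>v unit_vec d j \<in> I" unfolding I_def using j by auto
      thus "A *\<^sub>v unit_vec d j = 0\<^sub>m e d *\<^sub>v unit_vec d j" using I0 j by simp
    qed simp
    with nz show False by simp
  qed
  ultimately have I: "I = carrier_vec e" using irrW2 by auto
  have inj: "\<And>v. v \<in> carrier_vec d \<Longrightarrow> A *\<^sub>v v = 0\<^sub>v e \<Longrightarrow> v = 0\<^sub>v d" using K unfolding K_def by auto
  have surj: "\<And>u. u \<in> carrier_vec e \<Longrightarrow> \<exists>v\<in>carrier_vec d. A *\<^sub>v v = u"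
  proof -
    fix u :: "complex vec" assume "u \<in> carrier_vec e"
    hence "u \<in> I" using I by simp
    thus "\<exists>v\<in>carrier_vec d. A *\<^sub>v v = u" unfolding I_def by auto
  qed
  have de: "d = e" by (rule dims_eq[OF A inj surj])
  have Ad: "A \<in> carrier_mat d d" using A de by simp
  have "det A \<noteq> 0" unfolding det_0_iff_vec_prod_zero[OF Ad] using inj de by auto
  from det_non_zero_imp_unit[OF Ad this, of "()"]
  obtain B where B: "B \<in> carrier_mat d d" "B * A = 1\<^sub>m d" "A * B = 1\<^sub>m d"
    unfolding Units_def ring_mat_def by auto
  have "invertible_mat A" unfolding invertible_mat_def inverts_mat_def square_mat.simps
    using Ad B by (auto intro!: exI[of _ B])
  thus ?thesis unfolding iso_rep_def using de Ad comm by auto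
qed

end


definition cls :: "('g,'b) monoid_scheme \<Rightarrow> ('g \<Rightarrow> 'c) \<Rightarrow> bool" where
  "cls G F \<longleftrightarrow> (\<forall>g\<in>carrier G. \<forall>h\<in>carrier G. F (h \<otimes>\<^bsub>G\<^esub> g \<otimes>\<^bsub>G\<^esub> inv\<^bsub>G\<^esub> h) = F g)"

definition scal :: "('g,'b) monoid_scheme \<Rightarrow> ('g \<Rightarrow> complex) \<Rightarrow> ('g \<Rightarrow> complex mat) \<Rightarrow> nat \<Rightarrow> complex" where
  "scal G F \<rho> d = (\<Sum>g\<in>carrier G. F g * character \<rho> d g) / of_nat d"

lemma tr_character: "A \<in> carrier_mat d d \<Longrightarrow> tr A = character (\<lambda>_. A) d g"
  unfolding tr_def character_def by simp

lemma tr_smult: "A \<in> carrier_mat n n \<Longrightarrow> tr (c \<cdot>\<^sub>m A) = c * tr A"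
  unfolding tr_def by (auto simp add: sum_distrib_left)

context fgroup begin

lemma rep_dims: "is_rep G \<rho> d \<Longrightarrow> g \<in> carrier G \<Longrightarrow> dim_row (\<rho> g) = d"
  "is_rep G \<rho> d \<Longrightarrow> g \<in> carrier G \<Longrightarrow> dim_col (\<rho> g) = d"
  using rep_carrier[of \<rho> d g] by auto

lemma character_tr: "is_rep G \<rho> d \<Longrightarrow> g \<in> carrier G \<Longrightarrow> character \<rho> d g = tr (\<rho> g)"
  using rep_carrier[of \<rho> d g] unfolding tr_def character_def by auto

lemma class_scalar:
  assumes irr: "irreducible_rep G \<rho> d" and F: "cls G F"
  shows "gsum G d d (\<lambda>g. F g \<cdot>\<^sub>m \<rho> g) = scal G F \<rho> d \<cdot>\<^sub>m 1\<^sub>m d"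
proof -
  have rep: "is_rep G \<rho> d" and d: "d > 0" using irr unfolding irreducible_rep_def by auto
  note rc = rep_carrier[OF rep]
  let ?S = "gsum G d d (\<lambda>g. F g \<cdot>\<^sub>m \<rho> g)"
  have comm: "?S * \<rho> h = \<rho> h * ?S" if h: "h \<in> carrier G" for h
  proof -
    have "?S * \<rho> h = gsum G d d (\<lambda>g. (F g \<cdot>\<^sub>m \<rho> g) * \<rho> h)"
      by (rule gsum_mult_right, auto intro!: smult_carrier_mat rc h)
    also have "\<dots> = gsum G d d (\<lambda>g. F g \<cdot>\<^sub>m \<rho> (g \<otimes> h))"
      by (rule gsum_cong, simp add: rep_mult[OF rep] h mult_smult_assoc_mat[OF rc rc])
    also have "\<dots> = gsum G d d (\<lambda>u. F (h \<otimes> u \<otimes> inv h) \<cdot>\<^sub>m \<rho> ((h \<otimes> u \<otimes> inv h) \<otimes> h))"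
      by (rule gsum_reindex, rule bij_conj, simp add: h)
    also have "\<dots> = gsum G d d (\<lambda>u. F u \<cdot>\<^sub>m \<rho> (h \<otimes> u))"
    proof (rule gsum_cong)
      fix u assume u: "u \<in> carrier G"
      have "F (h \<otimes> u \<otimes> inv h) = F u" using F u h unfolding cls_def by blast
      moreover have "h \<otimes> u \<otimes> inv h \<otimes> h = h \<otimes> u"
        using u h by simp
      ultimately show "F (h \<otimes> u \<otimes> inv h) \<cdot>\<^sub>m \<rho> (h \<otimes> u \<otimes> inv h \<otimes> h) = F u \<cdot>\<^sub>m \<rho> (h \<otimes> u)" by simp
    qed
    also have "\<dots> = gsum G d d (\<lambda>g. \<rho> h * (F g \<cdot>\<^sub>m \<rho> g))"
      by (rule gsum_cong, simp add: rep_mult[OF rep] h mult_smult_distrib[OF rc rc])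
    also have "\<dots> = \<rho> h * ?S"
      by (rule gsum_mult_left[symmetric], auto intro!: smult_carrier_mat rc h)
    finally show ?thesis .
  qed
  from schur_scalar[OF irr _ comm] obtain c where c: "?S = c \<cdot>\<^sub>m 1\<^sub>m d" by auto
  have "tr ?S = (\<Sum>g\<in>carrier G. F g * character \<rho> d g)"
    by (subst tr_gsum, simp add: rep_dims[OF rep], rule sum.cong, auto simp: tr_smult[OF rc] character_tr[OF rep])
  moreover have "tr ?S = c * of_nat d" using c tr_smult_one by simp
  ultimately have "c = scal G F \<rho> d" unfolding scal_def using d by (simp add: field_simps)
  with c show ?thesis by simp
qed

lemma gsum_conv:
  assumes rep: "is_rep G \<rho> d"
  shows "gsum G d d (\<lambda>g. complex_of_real (conv G P R g) \<cdot>\<^sub>m \<rho> g)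
       = gsum G d d (\<lambda>g. complex_of_real (P g) \<cdot>\<^sub>m \<rho> g) * gsum G d d (\<lambda>g. complex_of_real (R g) \<cdot>\<^sub>m \<rho> g)"
proof (rule eq_matI)
  note rc = rep_carrier[OF rep]
  fix i j assume "i < dim_row (gsum G d d (\<lambda>g. complex_of_real (P g) \<cdot>\<^sub>m \<rho> g) * gsum G d d (\<lambda>g. complex_of_real (R g) \<cdot>\<^sub>m \<rho> g))"
    "j < dim_col (gsum G d d (\<lambda>g. complex_of_real (P g) \<cdot>\<^sub>m \<rho> g) * gsum G d d (\<lambda>g. complex_of_real (R g) \<cdot>\<^sub>m \<rho> g))"
  hence i: "i < d" and j: "j < d" by auto
  have "(gsum G d d (\<lambda>g. complex_of_real (P g) \<cdot>\<^sub>m \<rho> g) * gsum G d d (\<lambda>g. complex_of_real (R g) \<cdot>\<^sub>m \<rho> g)) $$ (i,j)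
     = (\<Sum>l<d. (\<Sum>g\<in>carrier G. of_real (P g) * \<rho> g $$ (i,l)) * (\<Sum>h\<in>carrier G. of_real (R h) * \<rho> h $$ (l,j)))"
    by (subst mult_entry[of _ d d _ d], auto simp: i j intro!: sum.cong arg_cong2[where f = "(*)"] dest: rc)
  also have "\<dots> = (\<Sum>l<d. \<Sum>g\<in>carrier G. \<Sum>h\<in>carrier G. of_real (P g) * of_real (R h) * (\<rho> g $$ (i,l) * \<rho> h $$ (l,j)))"
    by (rule sum.cong[OF refl], subst sum_product, intro sum.cong refl, simp add: mult_ac)
  also have "\<dots> = (\<Sum>g\<in>carrier G. \<Sum>h\<in>carrier G. \<Sum>l<d. of_real (P g) * of_real (R h) * (\<rho> g $$ (i,l) * \<rho> h $$ (l,j)))"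
    by (subst sum.swap, rule sum.cong[OF refl], rule sum.swap)
  also have "\<dots> = (\<Sum>g\<in>carrier G. \<Sum>h\<in>carrier G. of_real (P g) * of_real (R h) * (\<Sum>l<d. \<rho> g $$ (i,l) * \<rho> h $$ (l,j)))"
    by (simp add: sum_distrib_left)
  also have "\<dots> = (\<Sum>g\<in>carrier G. \<Sum>h\<in>carrier G. of_real (P g) * of_real (R h) * \<rho> (g \<otimes> h) $$ (i,j))"
    by (intro sum.cong refl, simp add: rep_mult[OF rep] mult_entry[OF rc rc] i j)
  also have "\<dots> = (\<Sum>h\<in>carrier G. \<Sum>g\<in>carrier G. of_real (P g) * of_real (R h) * \<rho> (g \<otimes> h) $$ (i,j))"
    by (rule sum.swap)
  also have "\<dots> = (\<Sum>h\<in>carrier G. \<Sum>u\<in>carrier G. of_real (P (u \<otimes> inv h)) * of_real (R h) * \<rho> u $$ (i,j))"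
  proof (rule sum.cong[OF refl])
    fix h assume h: "h \<in> carrier G"
    show "(\<Sum>g\<in>carrier G. of_real (P g) * of_real (R h) * \<rho> (g \<otimes> h) $$ (i,j))
        = (\<Sum>u\<in>carrier G. of_real (P (u \<otimes> inv h)) * of_real (R h) * \<rho> u $$ (i,j))"
      by (subst sum_reindex_G[OF bij_rmult[OF h]], rule sum.cong, auto simp: h)
  qed
  also have "\<dots> = (\<Sum>u\<in>carrier G. of_real (conv G P R u) * \<rho> u $$ (i,j))"
    unfolding conv_def by (subst sum.swap, simp add: sum_distrib_right)
  also have "\<dots> = gsum G d d (\<lambda>g. complex_of_real (conv G P R g) \<cdot>\<^sub>m \<rho> g) $$ (i,j)"
    using i j by (auto intro!: sum.cong dest: rc)
  finally show "gsum G d d (\<lambda>g. complex_of_real (conv G P R g) \<cdot>\<^sub>m \<rho> g) $$ (i,j) = (gsum G d d (\<lambda>g. complex_of_real (P g) \<cdot>\<^sub>m \<rho> g) * gsum G d d (\<lambda>g. complex_of_real (R g) \<cdot>\<^sub>m \<rho> g)) $$ (i,j)" by simp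
qed auto

lemma gsum_delta:
  assumes rep: "is_rep G \<rho> d"
  shows "gsum G d d (\<lambda>g. complex_of_real (delta_one G g) \<cdot>\<^sub>m \<rho> g) = 1\<^sub>m d"
proof (rule eq_matI)
  fix i j assume "i < dim_row (1\<^sub>m d :: complex mat)" "j < dim_col (1\<^sub>m d :: complex mat)"
  hence i: "i < d" and j: "j < d" by auto
  have "gsum G d d (\<lambda>g. complex_of_real (delta_one G g) \<cdot>\<^sub>m \<rho> g) $$ (i,j)
     = (\<Sum>g\<in>carrier G. (if g = \<one> then \<rho> g $$ (i,j) else 0))"
    using i j by (auto simp: delta_one_def rep_dims[OF rep] intro!: sum.cong)
  also have "\<dots> = \<rho> \<one> $$ (i,j)" using fin by (simp add: sum.delta)
  finally show "gsum G d d (\<lambda>g. complex_of_real (delta_one G g) \<cdot>\<^sub>m \<rho> g) $$ (i,j) = 1\<^sub>m d $$ (i,j)"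
    using rep_one[OF rep] i j by simp
qed auto

end


definition Emat :: "nat \<Rightarrow> nat \<Rightarrow> nat \<Rightarrow> nat \<Rightarrow> complex mat" where
  "Emat e d q p = mat e d (\<lambda>(a,b). if a = q \<and> b = p then 1 else 0)"

lemma Emat_carrier[simp]: "Emat e d q p \<in> carrier_mat e d"
  unfolding Emat_def by simp

lemma sandwich_entry:
  assumes S: "S \<in> carrier_mat e e" and R: "R \<in> carrier_mat d d" and q: "q < e" and p: "p < d"
    and i: "i < e" and r: "r < d"
  shows "(S * Emat e d q p * R) $$ (i,r) = S $$ (i,q) * R $$ (p,r)"
proof -
  have SE: "S * Emat e d q p \<in> carrier_mat e d" using S by simp
  have 1: "(S * Emat e d q p) $$ (i,b) = (if b = p then S $$ (i,q) else 0)" if b: "b < d" for b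
  proof -
    have "(S * Emat e d q p) $$ (i,b) = (\<Sum>a<e. S $$ (i,a) * Emat e d q p $$ (a,b))"
      by (rule mult_entry[OF S Emat_carrier i b])
    also have "\<dots> = (\<Sum>a<e. if a = q then (if b = p then S $$ (i,q) else 0) else 0)"
      using b by (intro sum.cong refl, auto simp: Emat_def)
    also have "\<dots> = (if b = p then S $$ (i,q) else 0)" using q by simp
    finally show ?thesis .
  qed
  have "(S * Emat e d q p * R) $$ (i,r) = (\<Sum>b<d. (S * Emat e d q p) $$ (i,b) * R $$ (b,r))"
    by (rule mult_entry[OF SE R i r])
  also have "\<dots> = (\<Sum>b<d. if b = p then S $$ (i,q) * R $$ (p,r) else 0)"
    by (intro sum.cong refl, auto simp: 1)
  also have "\<dots> = S $$ (i,q) * R $$ (p,r)" using p by simp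
  finally show ?thesis .
qed

lemma tr_Emat: "q < d \<Longrightarrow> p < d \<Longrightarrow> tr (Emat d d q p) = (if q = p then 1 else 0)"
  unfolding tr_def Emat_def by simp

context fgroup begin

lemma sandwich_intertwine:
  assumes rep1: "is_rep G \<rho> d" and rep2: "is_rep G \<sigma> e" and B: "B \<in> carrier_mat e d" and h: "h \<in> carrier G"
  shows "gsum G e d (\<lambda>g. \<sigma> g * B * \<rho> (inv g)) * \<rho> h = \<sigma> h * gsum G e d (\<lambda>g. \<sigma> g * B * \<rho> (inv g))"
proof -
  note r1 = rep_carrier[OF rep1] and r2 = rep_carrier[OF rep2]
  have "gsum G e d (\<lambda>g. \<sigma> g * B * \<rho> (inv g)) * \<rho> h = gsum G e d (\<lambda>g. \<sigma> g * B * \<rho> (inv g) * \<rho> h)"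
    by (rule gsum_mult_right, auto intro!: mult_carrier_mat r1 r2 B h)
  also have "\<dots> = gsum G e d (\<lambda>g. \<sigma> g * B * \<rho> (inv g \<otimes> h))"
  proof (rule gsum_cong)
    fix g assume g: "g \<in> carrier G"
    show "\<sigma> g * B * \<rho> (inv g) * \<rho> h = \<sigma> g * B * \<rho> (inv g \<otimes> h)"
    proof -
      have "\<sigma> g * B \<in> carrier_mat e d" using r2[OF g] B by simp
      thus ?thesis unfolding rep_mult[OF rep1 inv_closed[OF g] h]
        by (rule assoc_mult_mat[OF _ r1[OF inv_closed[OF g]] r1[OF h]])
    qed
  qed
  also have "\<dots> = gsum G e d (\<lambda>g. \<sigma> (h \<otimes> g) * B * \<rho> (inv (h \<otimes> g) \<otimes> h))"
    by (rule gsum_reindex, rule bij_lmult[OF h])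
  also have "\<dots> = gsum G e d (\<lambda>g. \<sigma> h * (\<sigma> g * B * \<rho> (inv g)))"
  proof (rule gsum_cong)
    fix g assume g: "g \<in> carrier G"
    have "inv (h \<otimes> g) \<otimes> h = inv g" using g h by (simp add: inv_mult_group m_assoc)
    thus "\<sigma> (h \<otimes> g) * B * \<rho> (inv (h \<otimes> g) \<otimes> h) = \<sigma> h * (\<sigma> g * B * \<rho> (inv g))"
      using assoc_mult_mat[OF r2[OF h] r2[OF g] B] assoc_mult_mat[OF r2[OF h] mult_carrier_mat[OF r2[OF g] B] r1[OF inv_closed[OF g]]]
        assoc_mult_mat[OF r2[OF g] B r1[OF inv_closed[OF g]]] g h by (simp add: rep_mult[OF rep2])
  qed
  also have "\<dots> = \<sigma> h * gsum G e d (\<lambda>g. \<sigma> g * B * \<rho> (inv g))"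
    by (rule gsum_mult_left[symmetric], auto intro!: mult_carrier_mat r1 r2 B h)
  finally show ?thesis .
qed

lemma sandwich_gsum_entry:
  assumes rep1: "is_rep G \<rho> d" and rep2: "is_rep G \<sigma> e" and q: "q < e" and p: "p < d" and i: "i < e" and r: "r < d"
  shows "gsum G e d (\<lambda>g. \<sigma> g * Emat e d q p * \<rho> (inv g)) $$ (i,r) = (\<Sum>g\<in>carrier G. \<sigma> g $$ (i,q) * \<rho> (inv g) $$ (p,r))"
proof -
  have "gsum G e d (\<lambda>g. \<sigma> g * Emat e d q p * \<rho> (inv g)) $$ (i,r) = (\<Sum>g\<in>carrier G. (\<sigma> g * Emat e d q p * \<rho> (inv g)) $$ (i,r))"
    using i r by simp
  also have "\<dots> = (\<Sum>g\<in>carrier G. \<sigma> g $$ (i,q) * \<rho> (inv g) $$ (p,r))"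
  proof (rule sum.cong[OF refl])
    fix g assume g: "g \<in> carrier G"
    show "(\<sigma> g * Emat e d q p * \<rho> (inv g)) $$ (i,r) = \<sigma> g $$ (i,q) * \<rho> (inv g) $$ (p,r)"
      by (rule sandwich_entry[OF rep_carrier[OF rep2 g] rep_carrier[OF rep1 inv_closed[OF g]] q p i r])
  qed
  finally show ?thesis .
qed

lemma char_sum_expand:
  assumes rep1: "is_rep G \<rho> d" and rep2: "is_rep G \<sigma> e"
  shows "(\<Sum>g\<in>carrier G. character \<sigma> e g * character \<rho> d (inv g))
    = (\<Sum>i<e. \<Sum>p<d. gsum G e d (\<lambda>g. \<sigma> g * Emat e d i p * \<rho> (inv g)) $$ (i,p))"
proof -
  have "(\<Sum>g\<in>carrier G. character \<sigma> e g * character \<rho> d (inv g))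
      = (\<Sum>g\<in>carrier G. \<Sum>i<e. \<Sum>p<d. \<sigma> g $$ (i,i) * \<rho> (inv g) $$ (p,p))"
    unfolding character_def by (simp add: sum_product)
  also have "\<dots> = (\<Sum>i<e. \<Sum>p<d. \<Sum>g\<in>carrier G. \<sigma> g $$ (i,i) * \<rho> (inv g) $$ (p,p))"
    by (subst sum.swap, rule sum.cong[OF refl], rule sum.swap)
  also have "\<dots> = (\<Sum>i<e. \<Sum>p<d. gsum G e d (\<lambda>g. \<sigma> g * Emat e d i p * \<rho> (inv g)) $$ (i,p))"
    by (intro sum.cong refl, subst sandwich_gsum_entry[OF rep1 rep2], auto)
  finally show ?thesis .
qed

lemma orth_noniso:
  assumes irr1: "irreducible_rep G \<rho> d" and irr2: "irreducible_rep G \<sigma> e"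
    and ni: "\<not> iso_rep G \<rho> d \<sigma> e"
  shows "(\<Sum>g\<in>carrier G. character \<sigma> e g * character \<rho> d (inv g)) = 0"
proof -
  have rep1: "is_rep G \<rho> d" and rep2: "is_rep G \<sigma> e" using irr1 irr2 unfolding irreducible_rep_def by auto
  have "gsum G e d (\<lambda>g. \<sigma> g * Emat e d i p * \<rho> (inv g)) = 0\<^sub>m e d" for i p
  proof (rule ccontr)
    assume "gsum G e d (\<lambda>g. \<sigma> g * Emat e d i p * \<rho> (inv g)) \<noteq> 0\<^sub>m e d"
    from schur_nonzero_iso[OF irr1 irr2 gsum_carrier sandwich_intertwine[OF rep1 rep2 Emat_carrier] this] ni
    show False by auto
  qed
  thus ?thesis unfolding char_sum_expand[OF rep1 rep2] by simp
qed

lemma orth_self: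
  assumes irr: "irreducible_rep G \<rho> d"
  shows "(\<Sum>g\<in>carrier G. character \<rho> d g * character \<rho> d (inv g)) = of_nat (order G)"
proof -
  have rep: "is_rep G \<rho> d" and d: "d > 0" using irr unfolding irreducible_rep_def by auto
  note rc = rep_carrier[OF rep]
  have entry: "gsum G d d (\<lambda>g. \<rho> g * Emat d d q p * \<rho> (inv g)) $$ (i,r)
     = (if i = r \<and> q = p then of_nat (order G) / of_nat d else 0)" if q: "q < d" and p: "p < d" and i: "i < d" and r: "r < d" for q p i r
  proof -
    let ?A = "gsum G d d (\<lambda>g. \<rho> g * Emat d d q p * \<rho> (inv g))"
    from schur_scalar[OF irr gsum_carrier sandwich_intertwine[OF rep rep Emat_carrier]]
    obtain c where c: "?A = c \<cdot>\<^sub>m 1\<^sub>m d" by blast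
    have "tr ?A = (\<Sum>g\<in>carrier G. tr (\<rho> g * Emat d d q p * \<rho> (inv g)))"
      by (rule tr_gsum, auto dest: rc)
    also have "\<dots> = (\<Sum>g\<in>carrier G. tr (Emat d d q p))"
    proof (rule sum.cong[OF refl])
      fix g assume g: "g \<in> carrier G"
      have "tr (\<rho> g * Emat d d q p * \<rho> (inv g)) = tr (\<rho> g * (Emat d d q p * \<rho> (inv g)))"
        using assoc_mult_mat[OF rc[OF g] Emat_carrier rc[OF inv_closed[OF g]]] by simp
      also have "\<dots> = tr (Emat d d q p * \<rho> (inv g) * \<rho> g)"
        by (rule tr_comm[OF rc[OF g] mult_carrier_mat[OF Emat_carrier rc[OF inv_closed[OF g]]]])
      also have "\<dots> = tr (Emat d d q p)"
        using assoc_mult_mat[OF Emat_carrier rc[OF inv_closed[OF g]] rc[OF g]] rep_inv[OF rep g]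
          right_mult_one_mat[OF Emat_carrier[of d d q p]] by simp
      finally show "tr (\<rho> g * Emat d d q p * \<rho> (inv g)) = tr (Emat d d q p)" .
    qed
    also have "\<dots> = of_nat (order G) * (if q = p then 1 else 0)"
      by (simp add: tr_Emat q p Coset.order_def)
    finally have "c * of_nat d = of_nat (order G) * (if q = p then 1 else 0)"
      using c tr_smult_one by simp
    hence "c = of_nat (order G) * (if q = p then 1 else 0) / of_nat d" using d by (simp add: field_simps)
    thus ?thesis using c i r by auto
  qed
  have "(\<Sum>g\<in>carrier G. character \<rho> d g * character \<rho> d (inv g))
     = (\<Sum>i<d. \<Sum>p<d. if i = p then of_nat (order G) / of_nat d else (0::complex))"
    unfolding char_sum_expand[OF rep rep] by (intro sum.cong refl, subst entry, auto)
  also have "\<dots> = of_nat (order G)" using d by simp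
  finally show ?thesis .
qed

end


lemma row_scalar: "A \<in> carrier_mat r s \<Longrightarrow> v \<in> carrier_vec s \<Longrightarrow> i < r \<Longrightarrow> row A i \<bullet> v = (\<Sum>l<s. A $$ (i,l) * v $ l)"
  by (auto simp: scalar_prod_def atLeast0LessThan intro!: sum.cong)

lemma sum3_rev: "(\<Sum>i\<in>A. \<Sum>l\<in>B. \<Sum>m\<in>C. f i l m) = (\<Sum>m\<in>C. \<Sum>l\<in>B. \<Sum>i\<in>A. f i l m)"
proof -
  have "(\<Sum>i\<in>A. \<Sum>l\<in>B. \<Sum>m\<in>C. f i l m) = (\<Sum>i\<in>A. \<Sum>m\<in>C. \<Sum>l\<in>B. f i l m)"
    by (rule sum.cong[OF refl], rule sum.swap)
  also have "\<dots> = (\<Sum>m\<in>C. \<Sum>i\<in>A. \<Sum>l\<in>B. f i l m)" by (rule sum.swap)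
  also have "\<dots> = (\<Sum>m\<in>C. \<Sum>l\<in>B. \<Sum>i\<in>A. f i l m)" by (rule sum.cong[OF refl], rule sum.swap)
  finally show ?thesis .
qed

definition adj :: "complex mat \<Rightarrow> complex mat" where
  "adj M = mat (dim_col M) (dim_row M) (\<lambda>(i,j). cnj (M $$ (j,i)))"

lemma adj_carrier[simp]: "M \<in> carrier_mat r c \<Longrightarrow> adj M \<in> carrier_mat c r"
  unfolding adj_def by auto

lemma adj_index: "i < dim_col M \<Longrightarrow> j < dim_row M \<Longrightarrow> adj M $$ (i,j) = cnj (M $$ (j,i))"
  unfolding adj_def by simp

lemma adj_mult: assumes A: "A \<in> carrier_mat r s" and B: "B \<in> carrier_mat s c"
  shows "adj (A * B) = adj B * adj A"
proof (rule eq_matI)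
  fix i j assume "i < dim_row (adj B * adj A)" "j < dim_col (adj B * adj A)"
  hence i: "i < c" and j: "j < r" using A B by (auto simp: adj_def)
  have "adj (A * B) $$ (i,j) = cnj ((A * B) $$ (j,i))" using A B i j by (simp add: adj_def)
  also have "\<dots> = cnj (\<Sum>l<s. A $$ (j,l) * B $$ (l,i))" by (simp only: mult_entry[OF A B j i])
  also have "\<dots> = (\<Sum>l<s. adj B $$ (i,l) * adj A $$ (l,j))"
    using A B i j by (auto simp: adj_def mult.commute intro!: sum.cong)
  also have "\<dots> = (adj B * adj A) $$ (i,j)"
    by (rule mult_entry[symmetric, OF adj_carrier[OF B] adj_carrier[OF A] i j])
  finally show "adj (A * B) $$ (i,j) = (adj B * adj A) $$ (i,j)" .
qed (use A B in \<open>auto simp: adj_def\<close>)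

lemma tr_adj: "M \<in> carrier_mat n n \<Longrightarrow> tr (adj M) = cnj (tr M)"
  unfolding tr_def adj_def by auto

lemma cscalar_expand: "u \<in> carrier_vec d \<Longrightarrow> v \<in> carrier_vec d \<Longrightarrow> u \<bullet>c v = (\<Sum>i<d. u $ i * cnj (v $ i))"
  unfolding scalar_prod_def by (auto simp: atLeast0LessThan intro!: sum.cong)

lemma quad_adj:
  assumes M: "M \<in> carrier_mat d d" and v: "v \<in> carrier_vec d"
  shows "((adj M * M) *\<^sub>v v) \<bullet>c v = (M *\<^sub>v v) \<bullet>c (M *\<^sub>v v)"
proof -
  have aM: "adj M * M \<in> carrier_mat d d" by (rule mult_carrier_mat[OF adj_carrier[OF M] M])
  have dM: "dim_row M = d" "dim_col M = d" using M by auto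
  have e1: "(adj M * M) $$ (i,l) = (\<Sum>m<d. cnj (M $$ (m,i)) * M $$ (m,l))" if "i < d" "l < d" for i l
  proof -
    have "(adj M * M) $$ (i,l) = (\<Sum>m<d. adj M $$ (i,m) * M $$ (m,l))" by (rule mult_entry[OF adj_carrier[OF M] M that])
    also have "\<dots> = (\<Sum>m<d. cnj (M $$ (m,i)) * M $$ (m,l))"
      by (rule sum.cong[OF refl], simp add: adj_index dM that)
    finally show ?thesis .
  qed
  have e2: "((adj M * M) *\<^sub>v v) $ i = (\<Sum>l<d. (\<Sum>m<d. cnj (M $$ (m,i)) * M $$ (m,l)) * v $ l)" if "i < d" for i
  proof -
    have "((adj M * M) *\<^sub>v v) $ i = (\<Sum>l<d. (adj M * M) $$ (i,l) * v $ l)" by (rule mult_vec_entry[OF aM v that])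
    also have "\<dots> = (\<Sum>l<d. (\<Sum>m<d. cnj (M $$ (m,i)) * M $$ (m,l)) * v $ l)"
      by (rule sum.cong[OF refl], simp add: e1 that)
    finally show ?thesis .
  qed
  have c1: "(adj M * M) *\<^sub>v v \<in> carrier_vec d" using aM v by simp
  have c2: "M *\<^sub>v v \<in> carrier_vec d" using M v by simp
  have "((adj M * M) *\<^sub>v v) \<bullet>c v = (\<Sum>i<d. ((adj M * M) *\<^sub>v v) $ i * cnj (v $ i))"
    by (rule cscalar_expand[OF c1 v])
  also have "\<dots> = (\<Sum>i<d. (\<Sum>l<d. (\<Sum>m<d. cnj (M $$ (m,i)) * M $$ (m,l)) * v $ l) * cnj (v $ i))"
    by (rule sum.cong[OF refl], simp add: e2)
  also have "\<dots> = (\<Sum>i<d. \<Sum>l<d. \<Sum>m<d. cnj (M $$ (m,i)) * M $$ (m,l) * v $ l * cnj (v $ i))"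
    by (simp only: sum_distrib_right)
  also have "\<dots> = (\<Sum>m<d. \<Sum>l<d. \<Sum>i<d. cnj (M $$ (m,i)) * M $$ (m,l) * v $ l * cnj (v $ i))"
    by (rule sum3_rev)
  also have "\<dots> = (\<Sum>m<d. \<Sum>l<d. \<Sum>i<d. (M $$ (m,l) * v $ l) * (cnj (M $$ (m,i)) * cnj (v $ i)))"
    by (intro sum.cong refl, simp only: mult_ac)
  also have "\<dots> = (\<Sum>m<d. (\<Sum>l<d. M $$ (m,l) * v $ l) * (\<Sum>i<d. cnj (M $$ (m,i)) * cnj (v $ i)))"
    by (simp only: sum_product)
  also have "\<dots> = (\<Sum>m<d. (M *\<^sub>v v) $ m * cnj ((M *\<^sub>v v) $ m))"
    by (rule sum.cong[OF refl], simp add: mult_vec_entry[OF M v])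
  also have "\<dots> = (M *\<^sub>v v) \<bullet>c (M *\<^sub>v v)"
    by (rule cscalar_expand[OF c2 c2, symmetric])
  finally show ?thesis .
qed

lemma gsum_quad:
  assumes f: "\<And>g. g \<in> carrier G \<Longrightarrow> f g \<in> carrier_mat d d" and v: "v \<in> carrier_vec d"
  shows "(gsum G d d f *\<^sub>v v) \<bullet>c v = (\<Sum>g\<in>carrier G. (f g *\<^sub>v v) \<bullet>c v)"
proof -
  have c1: "gsum G d d f *\<^sub>v v \<in> carrier_vec d" by (rule mult_mat_vec_carrier[OF gsum_carrier v])
  have "(gsum G d d f *\<^sub>v v) \<bullet>c v = (\<Sum>i<d. (gsum G d d f *\<^sub>v v) $ i * cnj (v $ i))"
    by (rule cscalar_expand[OF c1 v])
  also have "\<dots> = (\<Sum>i<d. (\<Sum>l<d. (\<Sum>g\<in>carrier G. f g $$ (i,l)) * v $ l) * cnj (v $ i))"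
  proof (rule sum.cong[OF refl])
    fix i assume "i \<in> {..<d}"
    hence i: "i < d" by simp
    show "(gsum G d d f *\<^sub>v v) $ i * cnj (v $ i) = (\<Sum>l<d. (\<Sum>g\<in>carrier G. f g $$ (i,l)) * v $ l) * cnj (v $ i)"
      by (subst mult_vec_entry[OF gsum_carrier v i], rule arg_cong[where f = "\<lambda>x. x * _"], rule sum.cong[OF refl], simp add: i)
  qed
  also have "\<dots> = (\<Sum>i<d. \<Sum>l<d. \<Sum>g\<in>carrier G. f g $$ (i,l) * v $ l * cnj (v $ i))"
    by (simp only: sum_distrib_right)
  also have "\<dots> = (\<Sum>g\<in>carrier G. \<Sum>l<d. \<Sum>i<d. f g $$ (i,l) * v $ l * cnj (v $ i))"
    by (rule sum3_rev)
  also have "\<dots> = (\<Sum>g\<in>carrier G. \<Sum>i<d. \<Sum>l<d. f g $$ (i,l) * v $ l * cnj (v $ i))"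
    by (rule sum.cong[OF refl], rule sum.swap)
  also have "\<dots> = (\<Sum>g\<in>carrier G. (f g *\<^sub>v v) \<bullet>c v)"
  proof (rule sum.cong[OF refl])
    fix g assume g: "g \<in> carrier G"
    have c2: "f g *\<^sub>v v \<in> carrier_vec d" using f[OF g] v by simp
    show "(\<Sum>i<d. \<Sum>l<d. f g $$ (i,l) * v $ l * cnj (v $ i)) = (f g *\<^sub>v v) \<bullet>c v"
      unfolding cscalar_expand[OF c2 v]
    proof (rule sum.cong[OF refl])
      fix i assume "i \<in> {..<d}"
      hence i: "i < d" by simp
      show "(\<Sum>l<d. f g $$ (i,l) * v $ l * cnj (v $ i)) = (f g *\<^sub>v v) $ i * cnj (v $ i)"
        by (subst mult_vec_entry[OF f[OF g] v i], simp only: sum_distrib_right)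
    qed
  qed
  finally show ?thesis .
qed

context fgroup begin

lemma char_inv:
  assumes rep: "is_rep G \<rho> d" and g0: "g0 \<in> carrier G"
  shows "character \<rho> d (inv g0) = cnj (character \<rho> d g0)"
proof -
  note rc = rep_carrier[OF rep]
  define H where "H = gsum G d d (\<lambda>g. adj (\<rho> g) * \<rho> g)"
  have H: "H \<in> carrier_mat d d" unfolding H_def by simp
  have fc: "adj (\<rho> g) * \<rho> g \<in> carrier_mat d d" if "g \<in> carrier G" for g
    by (rule mult_carrier_mat[OF adj_carrier[OF rc[OF that]] rc[OF that]])
  have invar: "adj (\<rho> h) * H * \<rho> h = H" if h: "h \<in> carrier G" for h
  proof -
    have "adj (\<rho> h) * H = gsum G d d (\<lambda>g. adj (\<rho> h) * (adj (\<rho> g) * \<rho> g))"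
      unfolding H_def by (rule gsum_mult_left[OF fc adj_carrier[OF rc[OF h]]])
    hence "adj (\<rho> h) * H * \<rho> h = gsum G d d (\<lambda>g. adj (\<rho> h) * (adj (\<rho> g) * \<rho> g) * \<rho> h)"
      using gsum_mult_right[OF mult_carrier_mat[OF adj_carrier[OF rc[OF h]] fc] rc[OF h]] by simp
    also have "\<dots> = gsum G d d (\<lambda>g. adj (\<rho> (g \<otimes> h)) * \<rho> (g \<otimes> h))"
    proof (rule gsum_cong)
      fix g assume g: "g \<in> carrier G"
      have a1: "adj (\<rho> h) \<in> carrier_mat d d" "adj (\<rho> g) \<in> carrier_mat d d" using rc[OF h] rc[OF g] by auto
      have "adj (\<rho> (g \<otimes> h)) * \<rho> (g \<otimes> h) = (adj (\<rho> h) * adj (\<rho> g)) * (\<rho> g * \<rho> h)"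
        unfolding rep_mult[OF rep g h] adj_mult[OF rc[OF g] rc[OF h]] ..
      also have "\<dots> = adj (\<rho> h) * (adj (\<rho> g) * \<rho> g) * \<rho> h"
        using assoc_mult_mat[OF a1(1) a1(2) mult_carrier_mat[OF rc[OF g] rc[OF h]]]
          assoc_mult_mat[OF a1(1) mult_carrier_mat[OF a1(2) rc[OF g]] rc[OF h]]
          assoc_mult_mat[OF a1(2) rc[OF g] rc[OF h]] by simp
      finally show "adj (\<rho> h) * (adj (\<rho> g) * \<rho> g) * \<rho> h = adj (\<rho> (g \<otimes> h)) * \<rho> (g \<otimes> h)" by simp
    qed
    also have "\<dots> = H" unfolding H_def by (rule gsum_reindex[symmetric, OF bij_rmult[OF h]])
    finally show ?thesis .
  qed
  have kern: "v = 0\<^sub>v d" if v: "v \<in> carrier_vec d" and Hv: "H *\<^sub>v v = 0\<^sub>v d" for v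
  proof -
    have "(\<Sum>g\<in>carrier G. (\<rho> g *\<^sub>v v) \<bullet>c (\<rho> g *\<^sub>v v)) = (\<Sum>g\<in>carrier G. ((adj (\<rho> g) * \<rho> g) *\<^sub>v v) \<bullet>c v)"
      by (rule sum.cong[OF refl], rule quad_adj[symmetric, OF rc v], simp)
    also have "\<dots> = (H *\<^sub>v v) \<bullet>c v"
      unfolding H_def by (rule gsum_quad[symmetric, OF fc v])
    also have "\<dots> = 0"
      unfolding Hv by (rule scalar_prod_left_zero, rule carrier_vec_conjugate[OF v])
    finally have S: "(\<Sum>g\<in>carrier G. (\<rho> g *\<^sub>v v) \<bullet>c (\<rho> g *\<^sub>v v)) = 0" .
    have nn: "\<And>g. g \<in> carrier G \<Longrightarrow> 0 \<le> (\<rho> g *\<^sub>v v) \<bullet>c (\<rho> g *\<^sub>v v)"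
      by (rule conjugate_square_ge_0_vec)
    have "(\<rho> \<one> *\<^sub>v v) \<bullet>c (\<rho> \<one> *\<^sub>v v) = 0"
      using bspec[OF iffD1[OF sum_nonneg_eq_0_iff[OF fin nn] S] one_closed] .
    hence "v \<bullet>c v = 0" unfolding rep_one[OF rep] one_mult_mat_vec[OF v] .
    thus ?thesis using conjugate_square_eq_0_vec[OF v] by blast
  qed
  have "det H \<noteq> 0" unfolding det_0_iff_vec_prod_zero[OF H] using kern by auto
  from det_non_zero_imp_unit[OF H this, of "()"]
  obtain Hi where Hi: "Hi \<in> carrier_mat d d" "Hi * H = 1\<^sub>m d" "H * Hi = 1\<^sub>m d"
    unfolding Units_def ring_mat_def by auto
  have ig: "inv g0 \<in> carrier G" using g0 by simp
  have a0: "adj (\<rho> g0) \<in> carrier_mat d d" using rc[OF g0] by simp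
  have AH: "adj (\<rho> g0) * H = H * \<rho> (inv g0)"
  proof -
    have "adj (\<rho> g0) * H = adj (\<rho> g0) * H * (\<rho> g0 * \<rho> (inv g0))"
      using rep_inv[OF rep g0] right_mult_one_mat[OF mult_carrier_mat[OF a0 H]] by simp
    also have "\<dots> = (adj (\<rho> g0) * H * \<rho> g0) * \<rho> (inv g0)"
      by (rule assoc_mult_mat[symmetric, OF mult_carrier_mat[OF a0 H] rc[OF g0] rc[OF ig]])
    also have "\<dots> = H * \<rho> (inv g0)" using invar[OF g0] by simp
    finally show ?thesis .
  qed
  have "tr (adj (\<rho> g0)) = tr (adj (\<rho> g0) * H * Hi)"
    using assoc_mult_mat[OF a0 H Hi(1)] Hi(3) right_mult_one_mat[OF a0] by simp
  also have "\<dots> = tr (H * (\<rho> (inv g0) * Hi))"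
    unfolding AH using assoc_mult_mat[OF H rc[OF ig] Hi(1)] by simp
  also have "\<dots> = tr (\<rho> (inv g0) * Hi * H)"
    by (rule tr_comm[OF H mult_carrier_mat[OF rc[OF ig] Hi(1)]])
  also have "\<dots> = tr (\<rho> (inv g0))"
    using assoc_mult_mat[OF rc[OF ig] Hi(1) H] Hi(2) right_mult_one_mat[OF rc[OF ig]] by simp
  finally have "tr (\<rho> (inv g0)) = cnj (tr (\<rho> g0))" using tr_adj[OF rc[OF g0]] by simp
  thus ?thesis using character_tr[OF rep g0] character_tr[OF rep ig] by simp
qed

end


lemma invertible_mat_inv: assumes "invertible_mat (P :: complex mat)" "P \<in> carrier_mat n n"
  shows "\<exists>B\<in>carrier_mat n n. B * P = 1\<^sub>m n \<and> P * B = 1\<^sub>m n"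
proof -
  from assms obtain B where B: "P * B = 1\<^sub>m (dim_row P)" "B * P = 1\<^sub>m (dim_row B)"
    unfolding invertible_mat_def inverts_mat_def by auto
  have "dim_col B = n" using B(1) assms(2) by (metis carrier_matD(1) index_mult_mat(3) index_one_mat(3))
  moreover have "dim_row B = n" using B(2) assms(2) by (metis carrier_matD(2) index_mult_mat(3) index_one_mat(3))
  ultimately show ?thesis using B assms(2) by (intro bexI[of _ B], auto)
qed

context fgroup begin

lemma coef_orth:
  fixes k :: nat
  assumes irr: "\<forall>j<k. irreducible_rep G (\<rho> j) (d j)"
    and noniso: "\<forall>j<k. \<forall>l<k. j \<noteq> l \<longrightarrow> \<not> iso_rep G (\<rho> j) (d j) (\<rho> l) (d l)"
    and F: "\<forall>g\<in>carrier G. F g = (\<Sum>l<k. a l * character (\<rho> l) (d l) g)"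
    and real: "\<forall>g\<in>carrier G. cnj (F g) = F g" and j: "j < k"
  shows "cnj (\<Sum>g\<in>carrier G. F g * character (\<rho> j) (d j) g) = a j * of_nat (order G)"
proof -
  have repj: "is_rep G (\<rho> j) (d j)" using irr j unfolding irreducible_rep_def by auto
  have "cnj (\<Sum>g\<in>carrier G. F g * character (\<rho> j) (d j) g) = (\<Sum>g\<in>carrier G. F g * character (\<rho> j) (d j) (inv g))"
    by (simp, rule sum.cong[OF refl], simp add: real char_inv[OF repj])
  also have "\<dots> = (\<Sum>g\<in>carrier G. \<Sum>l<k. a l * (character (\<rho> l) (d l) g * character (\<rho> j) (d j) (inv g)))"
    by (rule sum.cong[OF refl], simp add: F sum_distrib_right mult.assoc)
  also have "\<dots> = (\<Sum>l<k. a l * (\<Sum>g\<in>carrier G. character (\<rho> l) (d l) g * character (\<rho> j) (d j) (inv g)))"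
    by (subst sum.swap, simp add: sum_distrib_left)
  also have "\<dots> = (\<Sum>l<k. if l = j then a j * of_nat (order G) else 0)"
  proof (rule sum.cong[OF refl])
    fix l assume "l \<in> {..<k}"
    hence l: "l < k" by simp
    show "a l * (\<Sum>g\<in>carrier G. character (\<rho> l) (d l) g * character (\<rho> j) (d j) (inv g)) = (if l = j then a j * of_nat (order G) else 0)"
    proof (cases "l = j")
      case True thus ?thesis using orth_self[of "\<rho> j" "d j"] irr j by simp
    next
      case False
      have "\<not> iso_rep G (\<rho> j) (d j) (\<rho> l) (d l)" using noniso j l False by auto
      from orth_noniso[of "\<rho> j" "d j" "\<rho> l" "d l", OF _ _ this] irr j l False show ?thesis by simp
    qed
  qed
  also have "\<dots> = a j * of_nat (order G)"
 using j by simp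
  finally show ?thesis .
qed

lemma iso_triv_const:
  assumes rep: "is_rep G \<rho> d" and iso: "iso_rep G \<rho> d triv_rep 1" and g: "g \<in> carrier G"
  shows "d = 1" "\<rho> g = 1\<^sub>m 1"
proof -
  from iso obtain P where d: "d = 1" and P: "P \<in> carrier_mat 1 1" "invertible_mat P" and
    c: "\<forall>g\<in>carrier G. P * \<rho> g = triv_rep g * P"
    unfolding iso_rep_def by auto
  show "d = 1" by fact
  have rg: "\<rho> g \<in> carrier_mat 1 1" using rep_carrier[OF rep g] d by simp
  from invertible_mat_inv[OF P(2,1)] obtain B where B: "B \<in> carrier_mat 1 1" "B * P = 1\<^sub>m 1" by auto
  have "P * \<rho> g = P" using c g P(1) unfolding triv_rep_def by simp
  hence "B * (P * \<rho> g) = 1\<^sub>m 1" using B by simp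
  thus "\<rho> g = 1\<^sub>m 1" using assoc_mult_mat[OF B(1) P(1) rg, symmetric] B(2) rg by simp
qed

lemma triv_iso_const:
  assumes rep: "is_rep G \<rho> d" and iso: "iso_rep G triv_rep 1 \<rho> d" and g: "g \<in> carrier G"
  shows "d = 1" "\<rho> g = 1\<^sub>m 1"
proof -
  from iso obtain P where d: "d = 1" and P: "P \<in> carrier_mat 1 1" "invertible_mat P" and
    c: "\<forall>g\<in>carrier G. P * triv_rep g = \<rho> g * P"
    unfolding iso_rep_def by auto
  show "d = 1" using d by simp
  have rg: "\<rho> g \<in> carrier_mat 1 1" using rep_carrier[OF rep g] d by simp
  from invertible_mat_inv[OF P(2,1)] obtain B where B: "B \<in> carrier_mat 1 1" "P * B = 1\<^sub>m 1" by auto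
  have "\<rho> g * P = P" using c g P(1) unfolding triv_rep_def by simp
  hence "(\<rho> g * P) * B = 1\<^sub>m 1" using B by simp
  thus "\<rho> g = 1\<^sub>m 1" using assoc_mult_mat[OF rg P(1) B(1)] B(2) rg by simp
qed

lemma triv_irreducible: "irreducible_rep G triv_rep 1"
  unfolding irreducible_rep_def
proof (intro conjI allI impI)
  show "is_rep G triv_rep 1" unfolding is_rep_def triv_rep_def by auto
  show "(0::nat) < 1" by simp
  fix W assume W: "invariant_subspace G triv_rep 1 W"
  show "W = {0\<^sub>v 1} \<or> W = carrier_vec 1"
  proof (cases "W = {0\<^sub>v 1}")
    case False
    have sub: "W \<subseteq> carrier_vec 1" and z: "0\<^sub>v 1 \<in> W" and sm: "\<forall>c. \<forall>v\<in>W. c \<cdot>\<^sub>v v \<in> W"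
      using W unfolding invariant_subspace_def by auto
    from False z sub obtain v where v: "v \<in> W" "v \<noteq> 0\<^sub>v 1" "v \<in> carrier_vec 1" by auto
    have v0: "v $ 0 \<noteq> 0"
    proof
      assume "v $ 0 = 0"
      hence "v = 0\<^sub>v 1" using v(3) by (intro eq_vecI, auto)
      with v(2) show False by simp
    qed
    have "carrier_vec 1 \<subseteq> W"
    proof
      fix u :: "complex vec" assume u: "u \<in> carrier_vec 1"
      have "(u $ 0 / v $ 0) \<cdot>\<^sub>v v = u" using u v(3) v0 by (intro eq_vecI, auto)
      thus "u \<in> W" using sm v(1) by metis
    qed
    thus ?thesis using sub by auto
  qed simp
qed

end


context fgroup begin

lemma cls_conv: assumes P: "cls G P" and R: "cls G R" shows "cls G (conv G P R)"
  unfolding cls_def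
proof (intro ballI)
  fix g h assume g: "g \<in> carrier G" and h: "h \<in> carrier G"
  have "conv G P R (h \<otimes> g \<otimes> inv h) = (\<Sum>u\<in>carrier G. P ((h \<otimes> g \<otimes> inv h) \<otimes> inv u) * R u)"
    unfolding conv_def ..
  also have "\<dots> = (\<Sum>v\<in>carrier G. P ((h \<otimes> g \<otimes> inv h) \<otimes> inv (h \<otimes> v \<otimes> inv h)) * R (h \<otimes> v \<otimes> inv h))"
    by (rule sum_reindex_G[OF bij_conj[OF h]])
  also have "\<dots> = (\<Sum>v\<in>carrier G. P (g \<otimes> inv v) * R v)"
  proof (rule sum.cong[OF refl])
    fix v assume v: "v \<in> carrier G"
    have e: "(h \<otimes> g \<otimes> inv h) \<otimes> inv (h \<otimes> v \<otimes> inv h) = h \<otimes> (g \<otimes> inv v) \<otimes> inv h"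
      using g h v by (simp add: inv_mult_group m_assoc)
    show "P ((h \<otimes> g \<otimes> inv h) \<otimes> inv (h \<otimes> v \<otimes> inv h)) * R (h \<otimes> v \<otimes> inv h) = P (g \<otimes> inv v) * R v"
      unfolding e using P R g h v unfolding cls_def by simp
  qed
  also have "\<dots> = conv G P R g" unfolding conv_def ..
  finally show "conv G P R (h \<otimes> g \<otimes> inv h) = conv G P R g" .
qed

lemma cls_delta: "cls G (delta_one G)"
  unfolding cls_def delta_one_def
proof (intro ballI)
  fix g h assume g: "g \<in> carrier G" and h: "h \<in> carrier G"
  have "h \<otimes> g \<otimes> inv h = \<one> \<longleftrightarrow> g = \<one>"
  proof
    assume "h \<otimes> g \<otimes> inv h = \<one>"
    hence "inv h \<otimes> (h \<otimes> g \<otimes> inv h) \<otimes> h = inv h \<otimes> \<one> \<otimes> h" by simp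
    thus "g = \<one>" using g h by (simp add: m_assoc)
  qed (use h in simp)
  thus "(if h \<otimes> g \<otimes> inv h = \<one> then 1 else 0) = (if g = \<one> then 1 else (0::real))" by simp
qed

lemma cls_conv_word: "\<forall>i\<in>set w. cls G (Q i) \<Longrightarrow> cls G (conv_word G Q w)"
proof (induction w)
  case Nil thus ?case unfolding conv_word_def by (simp add: cls_delta)
next
  case (Cons i w)
  have "conv_word G Q (i # w) = conv G (Q i) (conv_word G Q w)" unfolding conv_word_def by simp
  thus ?case using Cons cls_conv by simp
qed

lemma cls_inv: assumes "cls G F" shows "cls G (\<lambda>g. F (inv g))"
  unfolding cls_def
proof (intro ballI)
  fix g h assume g: "g \<in> carrier G" and h: "h \<in> carrier G"
  have "inv (h \<otimes> g \<otimes> inv h) = h \<otimes> inv g \<otimes> inv h" using g h by (simp add: inv_mult_group m_assoc)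
  thus "F (inv (h \<otimes> g \<otimes> inv h)) = F (inv g)" using assms g h unfolding cls_def by simp
qed

lemma cls_comp: "cls G F \<Longrightarrow> cls G (\<lambda>g. f (F g))"
  unfolding cls_def by simp

lemma conv_word_scalar:
  assumes irr: "irreducible_rep G \<rho> d" and Qc: "\<forall>i\<in>set w. cls G (Q i)"
  shows "gsum G d d (\<lambda>g. complex_of_real (conv_word G Q w g) \<cdot>\<^sub>m \<rho> g)
     = (\<Prod>i<length w. scal G (\<lambda>g. complex_of_real (Q (w ! i) g)) \<rho> d) \<cdot>\<^sub>m 1\<^sub>m d"
  using Qc
proof (induction w)
  have rep: "is_rep G \<rho> d" using irr unfolding irreducible_rep_def by auto
  case Nil
  have "1 \<cdot>\<^sub>m 1\<^sub>m d = (1\<^sub>m d :: complex mat)" by (intro eq_matI) auto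
  thus ?case unfolding conv_word_def using gsum_delta[OF rep] by simp
next
  have rep: "is_rep G \<rho> d" using irr unfolding irreducible_rep_def by auto
  case (Cons i w)
  have cw: "conv_word G Q (i # w) = conv G (Q i) (conv_word G Q w)" unfolding conv_word_def by simp
  have "gsum G d d (\<lambda>g. complex_of_real (Q i g) \<cdot>\<^sub>m \<rho> g) = scal G (\<lambda>g. complex_of_real (Q i g)) \<rho> d \<cdot>\<^sub>m 1\<^sub>m d"
    by (rule class_scalar[OF irr cls_comp], use Cons.prems in simp)
  moreover have "gsum G d d (\<lambda>g. complex_of_real (conv_word G Q w g) \<cdot>\<^sub>m \<rho> g)
     = (\<Prod>i<length w. scal G (\<lambda>g. complex_of_real (Q (w ! i) g)) \<rho> d) \<cdot>\<^sub>m 1\<^sub>m d"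
    using Cons by simp
  ultimately have "gsum G d d (\<lambda>g. complex_of_real (conv_word G Q (i # w) g) \<cdot>\<^sub>m \<rho> g)
     = (scal G (\<lambda>g. complex_of_real (Q i g)) \<rho> d \<cdot>\<^sub>m 1\<^sub>m d) * ((\<Prod>i<length w. scal G (\<lambda>g. complex_of_real (Q (w ! i) g)) \<rho> d) \<cdot>\<^sub>m 1\<^sub>m d)"
    unfolding cw gsum_conv[OF rep] by simp
  also have "\<dots> = (scal G (\<lambda>g. complex_of_real (Q i g)) \<rho> d * (\<Prod>i<length w. scal G (\<lambda>g. complex_of_real (Q (w ! i) g)) \<rho> d)) \<cdot>\<^sub>m 1\<^sub>m d"
    by (intro eq_matI, auto)
  also have "\<dots> = (\<Prod>ia<length (i # w). scal G (\<lambda>g. complex_of_real (Q ((i # w) ! ia) g)) \<rho> d) \<cdot>\<^sub>m 1\<^sub>m d"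
    by (simp only: length_Cons prod.lessThan_Suc_shift nth_Cons_0 nth_Cons_Suc)
  finally show ?case .
qed

lemma gsum_intertwine:
  assumes P: "P \<in> carrier_mat D L"
    and c: "\<And>g. g \<in> carrier G \<Longrightarrow> \<rho> g \<in> carrier_mat L L \<and> \<sigma> g \<in> carrier_mat D D \<and> P * \<rho> g = \<sigma> g * P"
  shows "P * gsum G L L (\<lambda>g. F g \<cdot>\<^sub>m \<rho> g) = gsum G D D (\<lambda>g. F g \<cdot>\<^sub>m \<sigma> g) * P"
proof -
  have "P * gsum G L L (\<lambda>g. F g \<cdot>\<^sub>m \<rho> g) = gsum G D L (\<lambda>g. P * (F g \<cdot>\<^sub>m \<rho> g))"
    by (rule gsum_mult_left[OF _ P], use c in auto)
  also have "\<dots> = gsum G D L (\<lambda>g. (F g \<cdot>\<^sub>m \<sigma> g) * P)"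
  proof (rule gsum_cong)
    fix g assume g: "g \<in> carrier G"
    show "P * (F g \<cdot>\<^sub>m \<rho> g) = F g \<cdot>\<^sub>m \<sigma> g * P"
    proof -
      from c[OF g] have rg: "\<rho> g \<in> carrier_mat L L" and sg: "\<sigma> g \<in> carrier_mat D D" and e: "P * \<rho> g = \<sigma> g * P" by auto
      show ?thesis unfolding mult_smult_distrib[OF P rg] mult_smult_assoc_mat[OF sg P] e ..
    qed
  qed
  also have "\<dots> = gsum G D D (\<lambda>g. F g \<cdot>\<^sub>m \<sigma> g) * P"
    by (rule gsum_mult_right[symmetric, OF _ P], use c in auto)
  finally show ?thesis .
qed

end


definition diagm :: "nat \<Rightarrow> (nat \<Rightarrow> complex) \<Rightarrow> complex mat" where
  "diagm n f = mat n n (\<lambda>(i,j). if i = j then f i else 0)"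

definition idxl :: "(nat \<Rightarrow> nat) \<Rightarrow> nat list \<Rightarrow> nat list" where
  "idxl d js = concat (map (\<lambda>j. replicate (d j) j) js)"

lemma idxl_Cons: "idxl d (j # js) = replicate (d j) j @ idxl d js"
  unfolding idxl_def by simp

lemma length_idxl: "length (idxl d js) = sum_list (map d js)"
  by (induction js) (auto simp: idxl_def)

lemma dsum_list_Cons: "dsum_list (r # rs) = dsum_rep r (dsum_list rs)"
  unfolding dsum_list_def by simp

lemma tr_diagm: "tr (diagm n f * diagm n h) = (\<Sum>i<n. f i * h i)"
proof -
  have "tr (diagm n f * diagm n h) = (\<Sum>i<n. (diagm n f * diagm n h) $$ (i,i))"
    unfolding tr_def diagm_def by simp
  also have "\<dots> = (\<Sum>i<n. \<Sum>l<n. diagm n f $$ (i,l) * diagm n h $$ (l,i))"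
    by (rule sum.cong[OF refl], rule mult_entry, auto simp: diagm_def)
  also have "\<dots> = (\<Sum>i<n. f i * h i)"
    by (rule sum.cong[OF refl], simp add: diagm_def if_distrib[of "\<lambda>x. x * _"] cong: if_cong)
  finally show ?thesis .
qed

lemma sum_idxl: "(\<Sum>i<length (idxl d js). h (idxl d js ! i)) = (\<Sum>j\<leftarrow>js. of_nat (d j) * h j)"
proof -
  have "(\<Sum>i<length (idxl d js). h (idxl d js ! i)) = sum_list (map h (idxl d js))"
    by (simp add: sum_list_sum_nth atLeast0LessThan)
  also have "\<dots> = (\<Sum>j\<leftarrow>js. of_nat (d j) * h j)"
    by (induction js) (auto simp: idxl_def sum_list_replicate)
  finally show ?thesis .
qed

context fgroup begin

lemma msum_struct:
  assumes irr: "\<forall>j\<in>set js. irreducible_rep G (\<rho> j) (d j)" and F: "cls G F"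
  shows "snd (dsum_list (map (\<lambda>j. (\<rho> j, d j)) js)) = sum_list (map d js)
    \<and> (\<forall>g\<in>carrier G. fst (dsum_list (map (\<lambda>j. (\<rho> j, d j)) js)) g \<in> carrier_mat (sum_list (map d js)) (sum_list (map d js)))
    \<and> gsum G (sum_list (map d js)) (sum_list (map d js)) (\<lambda>g. F g \<cdot>\<^sub>m fst (dsum_list (map (\<lambda>j. (\<rho> j, d j)) js)) g)
      = diagm (sum_list (map d js)) (\<lambda>i. scal G F (\<rho> (idxl d js ! i)) (d (idxl d js ! i)))"
  using irr
proof (induction js)
  case Nil
  show ?case unfolding dsum_list_def by (auto simp: diagm_def intro!: eq_matI)
next
  case (Cons j js)
  define M' where "M' = fst (dsum_list (map (\<lambda>j. (\<rho> j, d j)) js))"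
  define D' where "D' = sum_list (map d js)"
  have IH: "snd (dsum_list (map (\<lambda>j. (\<rho> j, d j)) js)) = D'"
    "\<And>g. g \<in> carrier G \<Longrightarrow> M' g \<in> carrier_mat D' D'"
    "gsum G D' D' (\<lambda>g. F g \<cdot>\<^sub>m M' g) = diagm D' (\<lambda>i. scal G F (\<rho> (idxl d js ! i)) (d (idxl d js ! i)))"
    using Cons unfolding M'_def D'_def by auto
  have irrj: "irreducible_rep G (\<rho> j) (d j)" using Cons.prems by simp
  have repj: "is_rep G (\<rho> j) (d j)" using irrj unfolding irreducible_rep_def by auto
  note rcj = rep_carrier[OF repj]
  have ds: "dsum_list (map (\<lambda>j. (\<rho> j, d j)) (j # js)) = (\<lambda>g. four_block_mat (\<rho> j g) (0\<^sub>m (d j) D') (0\<^sub>m D' (d j)) (M' g), d j + D')"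
    unfolding list.map dsum_list_Cons dsum_rep_def M'_def
    by (cases "dsum_list (map (\<lambda>j. (\<rho> j, d j)) js)", use IH(1) in simp)
  have D: "sum_list (map d (j # js)) = d j + D'" unfolding D'_def by simp
  have carr: "four_block_mat (\<rho> j g) (0\<^sub>m (d j) D') (0\<^sub>m D' (d j)) (M' g) \<in> carrier_mat (d j + D') (d j + D')"
    if g: "g \<in> carrier G" for g
    by (rule four_block_carrier_mat[OF rcj[OF g] IH(2)[OF g]])
  have Sj: "gsum G (d j) (d j) (\<lambda>g. F g \<cdot>\<^sub>m \<rho> j g) = scal G F (\<rho> j) (d j) \<cdot>\<^sub>m 1\<^sub>m (d j)"
    by (rule class_scalar[OF irrj F])
  have main: "gsum G (d j + D') (d j + D') (\<lambda>g. F g \<cdot>\<^sub>m four_block_mat (\<rho> j g) (0\<^sub>m (d j) D') (0\<^sub>m D' (d j)) (M' g))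
      = diagm (d j + D') (\<lambda>i. scal G F (\<rho> (idxl d (j # js) ! i)) (d (idxl d (j # js) ! i)))"
  proof (rule eq_matI)
    fix a b assume "a < dim_row (diagm (d j + D') (\<lambda>i. scal G F (\<rho> (idxl d (j # js) ! i)) (d (idxl d (j # js) ! i))))"
      "b < dim_col (diagm (d j + D') (\<lambda>i. scal G F (\<rho> (idxl d (j # js) ! i)) (d (idxl d (j # js) ! i))))"
    hence a: "a < d j + D'" and b: "b < d j + D'" by (auto simp: diagm_def)
    have lhs: "gsum G (d j + D') (d j + D') (\<lambda>g. F g \<cdot>\<^sub>m four_block_mat (\<rho> j g) (0\<^sub>m (d j) D') (0\<^sub>m D' (d j)) (M' g)) $$ (a,b)
      = (\<Sum>g\<in>carrier G. F g * (if a < d j then if b < d j then \<rho> j g $$ (a,b) else 0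
                  else if b < d j then 0 else M' g $$ (a - d j, b - d j)))"
      using a b by (auto intro!: sum.cong simp: rep_dims[OF repj] carrier_matD[OF IH(2)])
    have nth: "idxl d (j # js) ! a = (if a < d j then j else idxl d js ! (a - d j))"
      unfolding idxl_Cons by (simp add: nth_append)
    show "gsum G (d j + D') (d j + D') (\<lambda>g. F g \<cdot>\<^sub>m four_block_mat (\<rho> j g) (0\<^sub>m (d j) D') (0\<^sub>m D' (d j)) (M' g)) $$ (a,b)
      = diagm (d j + D') (\<lambda>i. scal G F (\<rho> (idxl d (j # js) ! i)) (d (idxl d (j # js) ! i))) $$ (a,b)"
    proof (cases "a < d j")
      case True
      note aT = True
      show ?thesis
      proof (cases "b < d j")
        case True
        have "gsum G (d j) (d j) (\<lambda>g. F g \<cdot>\<^sub>m \<rho> j g) $$ (a,b) = (\<Sum>g\<in>carrier G. F g * \<rho> j g $$ (a,b))"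
          using aT True by (auto intro!: sum.cong simp: rep_dims[OF repj])
        thus ?thesis unfolding lhs Sj using aT True a b nth by (cases "a = b", simp_all add: diagm_def)
      next
        case False thus ?thesis unfolding lhs using aT a b nth by (simp add: diagm_def)
      qed
    next
      case False
      note aF = False
      show ?thesis
      proof (cases "b < d j")
        case True thus ?thesis unfolding lhs using aF a b nth by (simp add: diagm_def)
      next
        case False
        have "gsum G D' D' (\<lambda>g. F g \<cdot>\<^sub>m M' g) $$ (a - d j, b - d j) = (\<Sum>g\<in>carrier G. F g * M' g $$ (a - d j, b - d j))"
          using aF False a b by (auto intro!: sum.cong simp: carrier_matD[OF IH(2)])
        moreover have "(a - d j = b - d j) = (a = b)" using aF False by auto
        ultimately show ?thesis unfolding lhs IH(3) using aF False a b nth by (cases "a = b", simp_all add: diagm_def)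
      qed
    qed
  qed (auto simp: diagm_def)
  show ?case unfolding ds D using carr main by simp
qed

end


lemma cauchy_abs: fixes f :: "'a \<Rightarrow> real" assumes "finite A"
  shows "(\<Sum>x\<in>A. \<bar>f x\<bar>)\<^sup>2 \<le> real (card A) * (\<Sum>x\<in>A. (f x)\<^sup>2)"
proof -
  have "(\<Sum>x\<in>A. \<bar>f x\<bar>)\<^sup>2 = (\<Sum>x\<in>A. \<Sum>y\<in>A. \<bar>f x\<bar> * \<bar>f y\<bar>)"
    by (simp add: power2_eq_square sum_product)
  also have "\<dots> \<le> (\<Sum>x\<in>A. \<Sum>y\<in>A. ((f x)\<^sup>2 + (f y)\<^sup>2) / 2)"
  proof (intro sum_mono)
    fix x y
    have "0 \<le> (\<bar>f x\<bar> - \<bar>f y\<bar>)\<^sup>2" by simp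
    thus "\<bar>f x\<bar> * \<bar>f y\<bar> \<le> ((f x)\<^sup>2 + (f y)\<^sup>2) / 2"
      by (simp add: power2_eq_square algebra_simps)
  qed
  also have "\<dots> = (\<Sum>x\<in>A. \<Sum>y\<in>A. (f x)\<^sup>2 / 2) + (\<Sum>x\<in>A. \<Sum>y\<in>A. (f y)\<^sup>2 / 2)"
    by (simp add: add_divide_distrib sum.distrib)
  also have "\<dots> = real (card A) * (\<Sum>x\<in>A. (f x)\<^sup>2)"
    by (simp add: sum_divide_distrib[symmetric] sum_distrib_left mult.commute)
  finally show ?thesis .
qed

context fgroup begin

lemma act_one: "group_action G X \<phi> \<Longrightarrow> x \<in> X \<Longrightarrow> \<phi> \<one> x = x"
  using group_action.id_eq_one by (metis restrict_apply')

lemma act_inv_iff: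
  assumes ga: "group_action G X \<phi>" and g: "g \<in> carrier G" and x: "x \<in> X" and y: "y \<in> X"
  shows "\<phi> (inv g) y = x \<longleftrightarrow> \<phi> g x = y"
proof
  assume "\<phi> (inv g) y = x"
  hence "\<phi> g x = \<phi> (g \<otimes> inv g) y" using group_action.composition_rule[OF ga y g inv_closed[OF g]] by simp
  thus "\<phi> g x = y" using g act_one[OF ga y] by simp
next
  assume "\<phi> g x = y"
  hence "\<phi> (inv g) y = \<phi> (inv g \<otimes> g) x" using group_action.composition_rule[OF ga x inv_closed[OF g] g] by simp
  thus "\<phi> (inv g) y = x" using g act_one[OF ga x] by simp
qed

lemma perm_carrier: "perm_rep \<phi> xs g \<in> carrier_mat (length xs) (length xs)"
  unfolding perm_rep_def by simp

lemma perm_gsum_entry: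
  assumes i: "i < length xs" and j: "j < length xs"
  shows "gsum G (length xs) (length xs) (\<lambda>g. complex_of_real (F g) \<cdot>\<^sub>m perm_rep \<phi> xs g) $$ (i,j)
    = complex_of_real (act_dist G \<phi> F (xs ! j) (xs ! i))"
  using i j unfolding act_dist_def perm_rep_def by (auto intro!: sum.cong)

lemma perm_transpose:
  assumes ga: "group_action G X \<phi>" and set: "set xs = X"
  shows "transpose_mat (gsum G (length xs) (length xs) (\<lambda>g. complex_of_real (F g) \<cdot>\<^sub>m perm_rep \<phi> xs g))
     = gsum G (length xs) (length xs) (\<lambda>g. complex_of_real (F (inv g)) \<cdot>\<^sub>m perm_rep \<phi> xs g)"
proof (rule eq_matI)
  fix i j assume "i < dim_row (gsum G (length xs) (length xs) (\<lambda>g. complex_of_real (F (inv g)) \<cdot>\<^sub>m perm_rep \<phi> xs g))"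
    "j < dim_col (gsum G (length xs) (length xs) (\<lambda>g. complex_of_real (F (inv g)) \<cdot>\<^sub>m perm_rep \<phi> xs g))"
  hence i: "i < length xs" and j: "j < length xs" by auto
  have xi: "xs ! i \<in> X" and xj: "xs ! j \<in> X" using i j set by auto
  have "transpose_mat (gsum G (length xs) (length xs) (\<lambda>g. complex_of_real (F g) \<cdot>\<^sub>m perm_rep \<phi> xs g)) $$ (i,j)
      = complex_of_real (act_dist G \<phi> F (xs ! i) (xs ! j))" using i j perm_gsum_entry[OF j i] by simp
  also have "act_dist G \<phi> F (xs ! i) (xs ! j) = (\<Sum>g\<in>carrier G. if \<phi> (inv g) (xs ! j) = xs ! i then F g else 0)"
    unfolding act_dist_def by (rule sum.cong[OF refl], simp add: act_inv_iff[OF ga _ xi xj])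
  also have "\<dots> = (\<Sum>g\<in>carrier G. if \<phi> (inv (inv g)) (xs ! j) = xs ! i then F (inv g) else 0)"
    by (rule sum_reindex_G[OF bij_inv])
  also have "\<dots> = act_dist G \<phi> (\<lambda>g. F (inv g)) (xs ! j) (xs ! i)"
    unfolding act_dist_def by (rule sum.cong[OF refl], simp)
  finally show "transpose_mat (gsum G (length xs) (length xs) (\<lambda>g. complex_of_real (F g) \<cdot>\<^sub>m perm_rep \<phi> xs g)) $$ (i,j)
      = gsum G (length xs) (length xs) (\<lambda>g. complex_of_real (F (inv g)) \<cdot>\<^sub>m perm_rep \<phi> xs g) $$ (i,j)"
    using perm_gsum_entry[OF i j, of "\<lambda>g. F (inv g)"] by simp
qed auto

lemma orbit_count:
  assumes ta: "transitive_action G X \<phi>" and finX: "finite X" and x: "x \<in> X" and y: "y \<in> X"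
  shows "real (card {g \<in> carrier G. \<phi> g x = y}) = real (order G) / real (card X)"
proof -
  have ga: "group_action G X \<phi>" using ta unfolding transitive_action_def by auto
  define S where "S y = {g \<in> carrier G. \<phi> g x = y}" for y
  have cardS: "card (S y') = card (S x)" if y': "y' \<in> X" for y'
  proof -
    obtain h where h: "h \<in> carrier G" "\<phi> h x = y'" using transitive_action.unique_orbit[OF ta x y'] by auto
    have "bij_betw (\<lambda>g. h \<otimes> g) (S x) (S y')"
    proof (rule bij_betwI[where g = "\<lambda>g. inv h \<otimes> g"])
      show "(\<lambda>g. h \<otimes> g) \<in> S x \<rightarrow> S y'"
        using h group_action.composition_rule[OF ga x] by (auto simp: S_def)
      show "(\<lambda>g. inv h \<otimes> g) \<in> S y' \<rightarrow> S x"
      proof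
        fix g assume g: "g \<in> S y'"
        hence gc: "g \<in> carrier G" and "\<phi> g x = y'" by (auto simp: S_def)
        hence "\<phi> (inv h \<otimes> g) x = \<phi> (inv h) y'" using group_action.composition_rule[OF ga x inv_closed[OF h(1)] gc] by simp
        also have "\<dots> = x" using act_inv_iff[OF ga h(1) x y'] h by simp
        finally show "inv h \<otimes> g \<in> S x" using gc h by (simp add: S_def)
      qed
    qed (use h in \<open>auto simp: S_def\<close>)
    thus ?thesis by (simp add: bij_betw_same_card)
  qed
  have U: "carrier G = (\<Union>y'\<in>X. S y')"
    using group_action.element_image[OF ga _ x] by (auto simp: S_def)
  have "order G = card (\<Union>y'\<in>X. S y')" unfolding Coset.order_def using U by simp
  also have "\<dots> = (\<Sum>y'\<in>X. card (S y'))"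
    by (rule card_UN_disjoint[OF finX], auto simp: S_def intro: finite_subset[OF _ fin])
  also have "\<dots> = card X * card (S x)" using cardS by simp
  finally have "real (order G) = real (card X) * real (card (S y))" using cardS[OF y] by simp
  moreover have "card X > 0" using x finX card_gt_0_iff by blast
  ultimately show ?thesis unfolding S_def by (simp add: field_simps)
qed

lemma act_dist_shift:
  assumes ga: "group_action G X \<phi>" and F: "cls G F" and x: "x \<in> X" and h: "h \<in> carrier G" and y: "y \<in> X"
  shows "act_dist G \<phi> F (\<phi> h x) y = act_dist G \<phi> F x (\<phi> (inv h) y)"
proof -
  have "act_dist G \<phi> F (\<phi> h x) y = (\<Sum>g\<in>carrier G. if \<phi> (g \<otimes> h) x = y then F g else 0)"
    unfolding act_dist_def by (rule sum.cong[OF refl], simp add: group_action.composition_rule[OF ga x _ h])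
  also have "\<dots> = (\<Sum>u\<in>carrier G. if \<phi> (u \<otimes> inv h \<otimes> h) x = y then F (u \<otimes> inv h) else 0)"
    by (rule sum_reindex_G[OF bij_rmult[OF inv_closed[OF h]]])
  also have "\<dots> = (\<Sum>u\<in>carrier G. if \<phi> u x = y then F (inv h \<otimes> u) else 0)"
  proof (rule sum.cong[OF refl])
    fix u assume u: "u \<in> carrier G"
    have "F (inv h \<otimes> (u \<otimes> inv h) \<otimes> inv (inv h)) = F (u \<otimes> inv h)"
      using F u h unfolding cls_def by (meson inv_closed m_closed)
    moreover have "inv h \<otimes> (u \<otimes> inv h) \<otimes> inv (inv h) = inv h \<otimes> u" using u h by (simp add: m_assoc)
    ultimately show "(if \<phi> (u \<otimes> inv h \<otimes> h) x = y then F (u \<otimes> inv h) else 0) = (if \<phi> u x = y then F (inv h \<otimes> u) else 0)"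
      using u h by simp
  qed
  also have "\<dots> = (\<Sum>v\<in>carrier G. if \<phi> (h \<otimes> v) x = y then F (inv h \<otimes> (h \<otimes> v)) else 0)"
    by (rule sum_reindex_G[OF bij_lmult[OF h]])
  also have "\<dots> = (\<Sum>v\<in>carrier G. if \<phi> v x = \<phi> (inv h) y then F v else 0)"
  proof (rule sum.cong[OF refl])
    fix v assume v: "v \<in> carrier G"
    have vx: "\<phi> v x \<in> X" using group_action.element_image[OF ga v x] by simp
    have "\<phi> (h \<otimes> v) x = y \<longleftrightarrow> \<phi> v x = \<phi> (inv h) y"
      using group_action.composition_rule[OF ga x h v] act_inv_iff[OF ga h vx y] by auto
    thus "(if \<phi> (h \<otimes> v) x = y then F (inv h \<otimes> (h \<otimes> v)) else 0) = (if \<phi> v x = \<phi> (inv h) y then F v else 0)"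
      using v h by simp
  qed
  also have "\<dots> = act_dist G \<phi> F x (\<phi> (inv h) y)" unfolding act_dist_def ..
  finally show ?thesis .
qed

end


lemma sum_js: "sum_list (map f (concat (map (\<lambda>j. replicate (mu j) j) [0..<k]))) = (\<Sum>j<k. of_nat (mu j) * f j)"
  for f :: "nat \<Rightarrow> complex"
  by (induction k) (auto simp: sum_list_replicate)

lemma smult_one_eq: assumes "c1 \<cdot>\<^sub>m 1\<^sub>m d = (c2 \<cdot>\<^sub>m 1\<^sub>m d :: complex mat)" "d > 0" shows "c1 = c2"
proof -
  have "(c1 \<cdot>\<^sub>m 1\<^sub>m d) $$ (0,0) = (c2 \<cdot>\<^sub>m 1\<^sub>m d :: complex mat) $$ (0,0)" using assms(1) by simp
  thus ?thesis using assms(2) by simp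
qed

lemma tr_similar:
  assumes P: "P \<in> carrier_mat n n" and Q: "Q \<in> carrier_mat n n" and PQ: "P * Q = 1\<^sub>m n" and QP: "Q * P = 1\<^sub>m n"
    and A: "A \<in> carrier_mat n n" and B: "B \<in> carrier_mat n n"
    and DA: "DA \<in> carrier_mat n n" and DB: "DB \<in> carrier_mat n n"
    and eA: "P * A = DA * P" and eB: "P * B = DB * P"
  shows "tr (B * A) = tr (DB * DA)"
proof -
  have BA: "B * A \<in> carrier_mat n n" using A B by simp
  have DD: "DB * DA \<in> carrier_mat n n" using DA DB by simp
  have "P * (B * A) = (P * B) * A" using assoc_mult_mat[OF P B A] by simp
  also have "\<dots> = DB * (P * A)" unfolding eB using assoc_mult_mat[OF DB P A] by simp
  also have "\<dots> = (DB * DA) * P" unfolding eA using assoc_mult_mat[OF DB DA P] by simp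
  finally have e: "P * (B * A) = (DB * DA) * P" .
  have "B * A = (Q * P) * (B * A)" unfolding QP using left_mult_one_mat[OF BA] by simp
  also have "\<dots> = Q * (P * (B * A))" using assoc_mult_mat[OF Q P BA] by simp
  also have "\<dots> = Q * ((DB * DA) * P)" unfolding e ..
  finally have "tr (B * A) = tr (Q * ((DB * DA) * P))" by simp
  also have "\<dots> = tr (((DB * DA) * P) * Q)" by (rule tr_comm[OF Q mult_carrier_mat[OF DD P]])
  also have "\<dots> = tr ((DB * DA) * (P * Q))" using assoc_mult_mat[OF DD P Q] by simp
  also have "\<dots> = tr (DB * DA)" unfolding PQ using right_mult_one_mat[OF DD] by simp
  finally show ?thesis .
qed

lemma invertible_one1: "invertible_mat (1\<^sub>m 1 :: complex mat)"
  unfolding invertible_mat_def inverts_mat_def by (auto intro!: exI[of _ "1\<^sub>m 1"])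

context fgroup begin

lemma scal_sub: "scal G (\<lambda>g. complex_of_real (F g - c)) \<rho> d
   = scal G (\<lambda>g. complex_of_real (F g)) \<rho> d - complex_of_real c * (\<Sum>g\<in>carrier G. character \<rho> d g) / of_nat d"
  unfolding scal_def by (simp add: sum_subtractf left_diff_distrib sum_distrib_left diff_divide_distrib)

lemma scal_inv_conj: assumes rep: "is_rep G \<rho> d"
  shows "scal G (\<lambda>g. complex_of_real (F (inv g))) \<rho> d = cnj (scal G (\<lambda>g. complex_of_real (F g)) \<rho> d)"
proof -
  have "(\<Sum>g\<in>carrier G. complex_of_real (F (inv g)) * character \<rho> d g)
     = (\<Sum>g\<in>carrier G. complex_of_real (F (inv (inv g))) * character \<rho> d (inv g))"
    by (rule sum_reindex_G[OF bij_inv])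
  also have "\<dots> = (\<Sum>g\<in>carrier G. cnj (complex_of_real (F g) * character \<rho> d g))"
    by (rule sum.cong[OF refl], simp add: char_inv[OF rep])
  finally show ?thesis unfolding scal_def by simp
qed

lemma act_dist_sub:
  assumes ta: "transitive_action G X \<phi>" and finX: "finite X" and x: "x \<in> X" and y: "y \<in> X"
  shows "act_dist G \<phi> (\<lambda>g. F g - 1 / real (order G)) x y = act_dist G \<phi> F x y - 1 / real (card X)"
proof -
  have n: "order G > 0" unfolding Coset.order_def using fin by (auto simp: card_gt_0_iff)
  have "act_dist G \<phi> (\<lambda>g. F g - 1 / real (order G)) x y
     = act_dist G \<phi> F x y - (\<Sum>g\<in>carrier G. if \<phi> g x = y then 1 / real (order G) else 0)"
    unfolding act_dist_def by (subst sum_subtractf[symmetric], rule sum.cong, auto)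
  also have "(\<Sum>g\<in>carrier G. if \<phi> g x = y then 1 / real (order G) else 0)
      = real (card {g \<in> carrier G. \<phi> g x = y}) * (1 / real (order G))"
    by (subst sum.inter_filter[OF fin, symmetric], simp)
  also have "\<dots> = 1 / real (card X)" unfolding orbit_count[OF ta finX x y] using n by simp
  finally show ?thesis .
qed

end


theorem corollary1p5:
  fixes G :: "('g, 'b) monoid_scheme"
    and k :: nat and \<rho> :: "nat \<Rightarrow> 'g \<Rightarrow> complex mat" and d :: "nat \<Rightarrow> nat"
    and m :: nat and Q :: "nat \<Rightarrow> 'g \<Rightarrow> real" and a :: "nat \<Rightarrow> nat \<Rightarrow> complex"
    and w :: "nat list"
    and X :: "'x set" and \<phi> :: "'g \<Rightarrow> 'x \<Rightarrow> 'x" and x0 :: 'x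
    and xs :: "'x list" and mult :: "nat \<Rightarrow> nat"
  assumes "group G" and "finite (carrier G)"
    and irr: "\<forall>j<k. irreducible_rep G (\<rho> j) (d j)"
    and noniso: "\<forall>j<k. \<forall>l<k. j \<noteq> l \<longrightarrow> \<not> iso_rep G (\<rho> j) (d j) (\<rho> l) (d l)"
    and complete: "\<forall>(\<sigma> :: 'g \<Rightarrow> complex mat) e. irreducible_rep G \<sigma> e \<longrightarrow>
                      (\<exists>j<k. iso_rep G \<sigma> e (\<rho> j) (d j))"
    and Q_nonneg: "\<forall>i<m. \<forall>g\<in>carrier G. Q i g \<ge> 0"
    and Q_sum: "\<forall>i<m. (\<Sum>g\<in>carrier G. Q i g) = 1"
    and Q_class: "\<forall>i<m. \<forall>g\<in>carrier G. \<forall>h\<in>carrier G.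
                     Q i (h \<otimes>\<^bsub>G\<^esub> g \<otimes>\<^bsub>G\<^esub> inv\<^bsub>G\<^esub> h) = Q i g"
    and Q_expand: "\<forall>i<m. \<forall>g\<in>carrier G.
                     complex_of_real (Q i g) = (\<Sum>j<k. a i j * character (\<rho> j) (d j) g)"
    and w_letters: "\<forall>i\<in>set w. i < m"
    and "finite X" and "transitive_action G X \<phi>" and "x0 \<in> X"
    and "distinct xs" and "set xs = X"
    and mult: "iso_rep G (perm_rep \<phi> xs) (length xs)
                 (fst (multiple_sum k \<rho> d mult)) (snd (multiple_sum k \<rho> d mult))"
  shows "(tv_norm X (\<lambda>x. act_dist G \<phi> (conv_word G Q w) x0 x - 1 / real (card X)))\<^sup>2
         \<le> 1/4 * (\<Sum>j\<in>{j. j < k \<and> \<not> iso_rep G (\<rho> j) (d j) triv_rep 1}.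
               real (mult j) * real (d j) * (real (order G) / real (d j)) ^ (2 * length w)
               * (cmod (\<Prod>i<length w. a (w ! i) j))\<^sup>2)"
proof -
  interpret fgroup G using assms(1,2) by (simp add: fgroup_def fgroup_axioms_def)
  have ta: "transitive_action G X \<phi>" by fact
  have ga: "group_action G X \<phi>" using ta unfolding transitive_action_def by auto
  have finX: "finite X" by fact
  have x0: "x0 \<in> X" by fact
  define n where "n = order G"
  have n_pos: "n > 0" unfolding n_def Coset.order_def using fin by (auto simp: card_gt_0_iff)
  define L where "L = length xs"
  have cardX: "card X = L" unfolding L_def using \<open>distinct xs\<close> \<open>set xs = X\<close> distinct_card by blast
  define js where "js = concat (map (\<lambda>j. replicate (mult j) j) [0..<k])"
  have js_lt: "\<forall>j\<in>set js. j < k" unfolding js_def by auto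
  have irrjs: "\<forall>j\<in>set js. irreducible_rep G (\<rho> j) (d j)" using js_lt irr by auto
  have ms: "multiple_sum k \<rho> d mult = dsum_list (map (\<lambda>j. (\<rho> j, d j)) js)"
    unfolding multiple_sum_def js_def by (simp add: map_concat comp_def)
  define M where "M = fst (dsum_list (map (\<lambda>j. (\<rho> j, d j)) js))"
  define D where "D = sum_list (map d js)"
  have cls0: "cls G (\<lambda>_. 0::complex)" unfolding cls_def by simp
  from msum_struct[OF irrjs cls0]
  have sndD: "snd (dsum_list (map (\<lambda>j. (\<rho> j, d j)) js)) = D" and Mc: "\<And>g. g \<in> carrier G \<Longrightarrow> M g \<in> carrier_mat D D"
    unfolding M_def D_def by auto
  from mult[unfolded ms iso_rep_def sndD M_def[symmetric]]
  obtain P where LD: "length xs = D" and P: "P \<in> carrier_mat D D" "invertible_mat P"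
    and Pc: "\<And>g. g \<in> carrier G \<Longrightarrow> P * perm_rep \<phi> xs g = M g * P" by auto
  have LD': "L = D" using LD unfolding L_def .
  from invertible_mat_inv[OF P(2,1)] obtain Pi where Pi: "Pi \<in> carrier_mat D D" "Pi * P = 1\<^sub>m D" "P * Pi = 1\<^sub>m D" by auto
  have trivirr: "irreducible_rep G triv_rep 1" by (rule triv_irreducible)
  define Fw where "Fw = conv_word G Q w"
  have Qc: "\<forall>i\<in>set w. cls G (Q i)" using w_letters Q_class unfolding cls_def by auto
  have Fwc: "cls G Fw" unfolding Fw_def by (rule cls_conv_word[OF Qc])
  define Fd where "Fd g = Fw g - 1 / real n" for g
  have Fdc: "cls G Fd" using Fwc unfolding Fd_def cls_def by simp
  define Fc where "Fc g = complex_of_real (Fd g)" for g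
  define Fci where "Fci g = complex_of_real (Fd (inv\<^bsub>G\<^esub> g))" for g
  have Fcc: "cls G Fc" using Fdc unfolding Fc_def cls_def by simp
  have Fcic: "cls G Fci" using cls_inv[OF Fdc] unfolding Fci_def cls_def by simp
  define A where "A = gsum G L L (\<lambda>g. Fc g \<cdot>\<^sub>m perm_rep \<phi> xs g)"
  define B where "B = gsum G L L (\<lambda>g. Fci g \<cdot>\<^sub>m perm_rep \<phi> xs g)"
  have BA: "B = transpose_mat A" unfolding A_def B_def Fc_def Fci_def L_def
    using perm_transpose[OF ga \<open>set xs = X\<close>, of Fd] by simp
  define sA where "sA j = scal G Fc (\<rho> j) (d j)" for j
  define sB where "sB j = scal G Fci (\<rho> j) (d j)" for j
  define DA where "DA = diagm D (\<lambda>i. sA (idxl d js ! i))"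
  define DB where "DB = diagm D (\<lambda>i. sB (idxl d js ! i))"
  have GA: "gsum G D D (\<lambda>g. Fc g \<cdot>\<^sub>m M g) = DA"
    using msum_struct[OF irrjs Fcc] unfolding DA_def sA_def M_def D_def by simp
  have GB: "gsum G D D (\<lambda>g. Fci g \<cdot>\<^sub>m M g) = DB"
    using msum_struct[OF irrjs Fcic] unfolding DB_def sB_def M_def D_def by simp
  have Pcond: "\<And>g. g \<in> carrier G \<Longrightarrow> perm_rep \<phi> xs g \<in> carrier_mat D D \<and> M g \<in> carrier_mat D D \<and> P * perm_rep \<phi> xs g = M g * P"
    using perm_carrier[of \<phi> xs] LD Mc Pc by auto
  have PA: "P * A = DA * P" unfolding A_def LD' GA[symmetric] by (rule gsum_intertwine[OF P(1) Pcond])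
  have PB: "P * B = DB * P" unfolding B_def LD' GB[symmetric] by (rule gsum_intertwine[OF P(1) Pcond])
  have trBA: "tr (B * A) = tr (DB * DA)"
    by (rule tr_similar[OF P(1) Pi(1) Pi(3) Pi(2) _ _ _ _ PA PB], auto simp: A_def B_def LD' DA_def DB_def diagm_def)
  define Tr where "Tr x y = act_dist G \<phi> Fw x y - 1 / real (card X)" for x y
  have Fd_fun: "Fd = (\<lambda>g. Fw g - 1 / real (order G))" by (rule ext, simp add: Fd_def n_def)
  have Aent: "A $$ (l,i) = complex_of_real (Tr (xs ! i) (xs ! l))" if i: "i < L" and l: "l < L" for i l
  proof -
    have xi: "xs ! i \<in> X" and xl: "xs ! l \<in> X" using i l \<open>set xs = X\<close> unfolding L_def by auto
    have "A $$ (l,i) = complex_of_real (act_dist G \<phi> Fd (xs ! i) (xs ! l))"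
      unfolding A_def Fc_def L_def by (rule perm_gsum_entry, use i l L_def in auto)
    also have "act_dist G \<phi> Fd (xs ! i) (xs ! l) = Tr (xs ! i) (xs ! l)"
      unfolding Fd_fun Tr_def by (rule act_dist_sub[OF ta finX xi xl])
    finally show ?thesis .
  qed
  have Acar: "A \<in> carrier_mat L L" and Bcar: "B \<in> carrier_mat L L" unfolding A_def B_def by auto
  have bijn: "bij_betw ((!) xs) {..<L} X" unfolding L_def by (rule bij_betw_nth[OF \<open>distinct xs\<close> refl \<open>set xs = X\<close>[symmetric]])
  have trS: "tr (B * A) = complex_of_real (\<Sum>x\<in>X. \<Sum>y\<in>X. (Tr x y)\<^sup>2)"
  proof -
    have "tr (B * A) = (\<Sum>i<L. (B * A) $$ (i,i))" unfolding tr_def using Bcar by simp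
    also have "\<dots> = (\<Sum>i<L. \<Sum>l<L. B $$ (i,l) * A $$ (l,i))"
      by (rule sum.cong[OF refl], rule mult_entry[OF Bcar Acar], auto)
    also have "\<dots> = (\<Sum>i<L. \<Sum>l<L. complex_of_real ((Tr (xs ! i) (xs ! l))\<^sup>2))"
    proof (intro sum.cong refl)
      fix i l assume "i \<in> {..<L}" "l \<in> {..<L}"
      hence i: "i < L" and l: "l < L" by auto
      have "B $$ (i,l) = A $$ (l,i)" unfolding BA using Acar i l by simp
      thus "B $$ (i,l) * A $$ (l,i) = complex_of_real ((Tr (xs ! i) (xs ! l))\<^sup>2)"
        using Aent[OF i l] by (simp add: power2_eq_square)
    qed
    also have "\<dots> = complex_of_real (\<Sum>i<L. \<Sum>l<L. (Tr (xs ! i) (xs ! l))\<^sup>2)" by simp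
    also have "(\<Sum>i<L. \<Sum>l<L. (Tr (xs ! i) (xs ! l))\<^sup>2) = (\<Sum>x\<in>X. \<Sum>y\<in>X. (Tr x y)\<^sup>2)"
      by (subst sum.reindex_bij_betw[OF bijn, symmetric], rule sum.cong[OF refl],
          subst sum.reindex_bij_betw[OF bijn, symmetric], simp)
    finally show ?thesis .
  qed
  have colsym: "(\<Sum>y\<in>X. (Tr x y)\<^sup>2) = (\<Sum>y\<in>X. (Tr x0 y)\<^sup>2)" if x: "x \<in> X" for x
  proof -
    obtain h where h: "h \<in> carrier G" "\<phi> h x0 = x" using transitive_action.unique_orbit[OF ta x0 x] by auto
    have bij: "bij_betw (\<phi> (inv\<^bsub>G\<^esub> h)) X X"
      using group_action.bij_prop0[OF ga inv_closed[OF h(1)]] unfolding Bij_def by auto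
    have "(\<Sum>y\<in>X. (Tr x y)\<^sup>2) = (\<Sum>y\<in>X. (Tr x0 (\<phi> (inv\<^bsub>G\<^esub> h) y))\<^sup>2)"
      by (rule sum.cong[OF refl], unfold Tr_def h(2)[symmetric], subst act_dist_shift[OF ga Fwc x0 h(1)], auto)
    also have "\<dots> = (\<Sum>y\<in>X. (Tr x0 y)\<^sup>2)" by (rule sum.reindex_bij_betw[OF bij])
    finally show ?thesis .
  qed
  have sumS: "(\<Sum>x\<in>X. \<Sum>y\<in>X. (Tr x y)\<^sup>2) = real (card X) * (\<Sum>y\<in>X. (Tr x0 y)\<^sup>2)"
    using colsym by simp
  have LHS: "(tv_norm X (\<lambda>x. act_dist G \<phi> (conv_word G Q w) x0 x - 1 / real (card X)))\<^sup>2
      \<le> 1/4 * (\<Sum>x\<in>X. \<Sum>y\<in>X. (Tr x y)\<^sup>2)"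
  proof -
    have tv: "tv_norm X (\<lambda>x. act_dist G \<phi> (conv_word G Q w) x0 x - 1 / real (card X)) = 1/2 * (\<Sum>y\<in>X. \<bar>Tr x0 y\<bar>)"
      unfolding tv_norm_def Tr_def Fw_def ..
    have "(tv_norm X (\<lambda>x. act_dist G \<phi> (conv_word G Q w) x0 x - 1 / real (card X)))\<^sup>2 = 1/4 * (\<Sum>y\<in>X. \<bar>Tr x0 y\<bar>)\<^sup>2"
      unfolding tv by (simp add: power2_eq_square)
    also have "\<dots> \<le> 1/4 * (real (card X) * (\<Sum>y\<in>X. (Tr x0 y)\<^sup>2))"
      using cauchy_abs[OF finX, of "Tr x0"] by simp
    finally show ?thesis unfolding sumS .
  qed
  have repj: "is_rep G (\<rho> j) (d j)" and dpos: "d j > 0" if "j < k" for j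
    using irr that unfolding irreducible_rep_def by auto
  have Fc_fun: "Fc = (\<lambda>g. complex_of_real (Fd g))" by (rule ext, simp add: Fc_def)
  have Fci_fun: "Fci = (\<lambda>g. complex_of_real (Fd (inv\<^bsub>G\<^esub> g)))" by (rule ext, simp add: Fci_def)
  have sBA: "sB j = cnj (sA j)" if j: "j < k" for j
    unfolding sA_def sB_def Fc_fun Fci_fun by (rule scal_inv_conj[OF repj[OF j]])
  have trD: "tr (DB * DA) = complex_of_real (\<Sum>j<k. real (mult j) * real (d j) * (cmod (sA j))\<^sup>2)"
  proof -
    have "tr (DB * DA) = (\<Sum>i<D. sB (idxl d js ! i) * sA (idxl d js ! i))"
      unfolding DA_def DB_def by (rule tr_diagm)
    also have "\<dots> = (\<Sum>j\<leftarrow>js. of_nat (d j) * (sB j * sA j))"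
      using sum_idxl[of "\<lambda>j. sB j * sA j" d js] unfolding length_idxl D_def .
    also have "\<dots> = (\<Sum>j<k. of_nat (mult j) * (of_nat (d j) * (sB j * sA j)))"
      unfolding js_def by (rule sum_js)
    also have "\<dots> = (\<Sum>j<k. complex_of_real (real (mult j) * real (d j) * (cmod (sA j))\<^sup>2))"
    proof (rule sum.cong[OF refl])
      fix j assume "j \<in> {..<k}"
      hence j: "j < k" by simp
      have "sB j * sA j = complex_of_real ((cmod (sA j))\<^sup>2)"
        unfolding sBA[OF j] complex_norm_square by simp
      thus "of_nat (mult j) * (of_nat (d j) * (sB j * sA j)) = complex_of_real (real (mult j) * real (d j) * (cmod (sA j))\<^sup>2)"
        by simp
    qed
    also have "\<dots> = complex_of_real (\<Sum>j<k. real (mult j) * real (d j) * (cmod (sA j))\<^sup>2)" by simp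
    finally show ?thesis .
  qed
  have keyeq: "(\<Sum>x\<in>X. \<Sum>y\<in>X. (Tr x y)\<^sup>2) = (\<Sum>j<k. real (mult j) * real (d j) * (cmod (sA j))\<^sup>2)"
  proof -
    have "complex_of_real (\<Sum>x\<in>X. \<Sum>y\<in>X. (Tr x y)\<^sup>2) = complex_of_real (\<Sum>j<k. real (mult j) * real (d j) * (cmod (sA j))\<^sup>2)"
      unfolding trS[symmetric] trD[symmetric] by (rule trBA)
    thus ?thesis by (simp only: of_real_eq_iff)
  qed
  define pj where "pj j = (\<Prod>i<length w. scal G (\<lambda>g. complex_of_real (Q (w ! i) g)) (\<rho> j) (d j))" for j
  have sA_eq: "sA j = pj j - complex_of_real (1 / real n) * (\<Sum>g\<in>carrier G. character (\<rho> j) (d j) g) / of_nat (d j)"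
    if j: "j < k" for j
  proof -
    have irrj: "irreducible_rep G (\<rho> j) (d j)" using irr j by auto
    have e1: "gsum G (d j) (d j) (\<lambda>g. complex_of_real (Fw g) \<cdot>\<^sub>m \<rho> j g) = pj j \<cdot>\<^sub>m 1\<^sub>m (d j)"
      unfolding Fw_def pj_def by (rule conv_word_scalar[OF irrj Qc])
    have e2: "gsum G (d j) (d j) (\<lambda>g. complex_of_real (Fw g) \<cdot>\<^sub>m \<rho> j g) = scal G (\<lambda>g. complex_of_real (Fw g)) (\<rho> j) (d j) \<cdot>\<^sub>m 1\<^sub>m (d j)"
      by (rule class_scalar[OF irrj cls_comp[OF Fwc]])
    have "scal G (\<lambda>g. complex_of_real (Fw g)) (\<rho> j) (d j) = pj j"
      using smult_one_eq[OF _ dpos[OF j]] e1 e2 by metis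
    moreover have "Fc = (\<lambda>g. complex_of_real (Fw g - 1 / real n))" by (rule ext, simp add: Fc_def Fd_def)
    ultimately show ?thesis unfolding sA_def using scal_sub[of Fw "1 / real n" "\<rho> j" "d j"] by (simp only:)
  qed
  from complete trivirr obtain j0 where j0: "j0 < k" "iso_rep G triv_rep 1 (\<rho> j0) (d j0)" by blast
  have d0: "d j0 = 1" and r0: "\<And>g. g \<in> carrier G \<Longrightarrow> \<rho> j0 g = 1\<^sub>m 1"
    using triv_iso_const[OF repj[OF j0(1)] j0(2)] by auto
  have chi1: "character \<rho>' 1 g = 1" if "\<rho>' g = 1\<^sub>m 1" for \<rho>' :: "'g \<Rightarrow> complex mat" and g
    unfolding character_def using that by simp
  have sA_triv: "sA j = 0" if j: "j < k" and iso: "iso_rep G (\<rho> j) (d j) triv_rep 1" for j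
  proof -
    have dj: "d j = 1" and rj: "\<And>g. g \<in> carrier G \<Longrightarrow> \<rho> j g = 1\<^sub>m 1"
      using iso_triv_const[OF repj[OF j] iso] by auto
    have ch: "\<And>g. g \<in> carrier G \<Longrightarrow> character (\<rho> j) (d j) g = 1" using chi1 rj dj by simp
    have "(\<Sum>g\<in>carrier G. character (\<rho> j) (d j) g) = of_nat n"
      unfolding n_def Coset.order_def using ch by simp
    moreover have "pj j = 1"
    proof -
      have "scal G (\<lambda>g. complex_of_real (Q (w ! i) g)) (\<rho> j) (d j) = 1" if i: "i < length w" for i
      proof -
        have wi: "w ! i < m" using w_letters i by auto
        have "scal G (\<lambda>g. complex_of_real (Q (w ! i) g)) (\<rho> j) (d j) = complex_of_real (\<Sum>g\<in>carrier G. Q (w ! i) g)"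
          unfolding scal_def dj using ch dj by simp
        thus ?thesis using Q_sum wi by simp
      qed
      thus ?thesis unfolding pj_def by simp
    qed
    ultimately show ?thesis using sA_eq[OF j] dj n_pos by simp
  qed
  have chi_sum0: "(\<Sum>g\<in>carrier G. character (\<rho> j) (d j) g) = 0"
    if j: "j < k" and ni: "\<not> iso_rep G (\<rho> j) (d j) triv_rep 1" for j
  proof -
    have "j \<noteq> j0"
    proof
      assume "j = j0"
      hence "iso_rep G (\<rho> j) (d j) triv_rep 1"
        unfolding iso_rep_def using d0 r0 invertible_one1 by (auto simp: triv_rep_def intro!: bexI[of _ "1\<^sub>m 1"])
      with ni show False by simp
    qed
    hence ni0: "\<not> iso_rep G (\<rho> j) (d j) (\<rho> j0) (d j0)" using noniso j j0(1) by auto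
    have "(\<Sum>g\<in>carrier G. character (\<rho> j0) (d j0) g * character (\<rho> j) (d j) (inv\<^bsub>G\<^esub> g)) = 0"
      by (rule orth_noniso[OF _ _ ni0], use irr j j0(1) in auto)
    hence "(\<Sum>g\<in>carrier G. character (\<rho> j) (d j) (inv\<^bsub>G\<^esub> g)) = 0"
      using chi1[OF r0] d0 by simp
    thus ?thesis using sum_reindex_G[OF bij_inv, of "character (\<rho> j) (d j)"] by simp
  qed
  have cmod_scal: "cmod (scal G (\<lambda>g. complex_of_real (Q i g)) (\<rho> j) (d j)) = real n / real (d j) * cmod (a i j)"
    if i: "i < m" and j: "j < k" for i j
  proof -
    have "cnj (\<Sum>g\<in>carrier G. complex_of_real (Q i g) * character (\<rho> j) (d j) g) = a i j * of_nat (order G)"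
    proof -
      have F1: "\<forall>g\<in>carrier G. complex_of_real (Q i g) = (\<Sum>l<k. a i l * character (\<rho> l) (d l) g)" using Q_expand i by auto
      have F2: "\<forall>g\<in>carrier G. cnj (complex_of_real (Q i g)) = complex_of_real (Q i g)" by simp
      show ?thesis by (rule coef_orth[OF irr noniso F1 F2 j])
    qed
    hence "cmod (\<Sum>g\<in>carrier G. complex_of_real (Q i g) * character (\<rho> j) (d j) g) = cmod (a i j) * real n"
      unfolding n_def by (metis complex_mod_cnj norm_mult norm_of_nat)
    thus ?thesis unfolding scal_def by (simp add: norm_divide)
  qed
  have sA_nt: "real (mult j) * real (d j) * (cmod (sA j))\<^sup>2 = real (mult j) * real (d j) * (real (order G) / real (d j)) ^ (2 * length w)
               * (cmod (\<Prod>i<length w. a (w ! i) j))\<^sup>2"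
    if j: "j < k" and ni: "\<not> iso_rep G (\<rho> j) (d j) triv_rep 1" for j
  proof -
    have "sA j = pj j" using sA_eq[OF j] chi_sum0[OF j ni] by simp
    hence "cmod (sA j) = (\<Prod>i<length w. cmod (scal G (\<lambda>g. complex_of_real (Q (w ! i) g)) (\<rho> j) (d j)))"
      unfolding pj_def by (simp add: prod_norm)
    also have "\<dots> = (\<Prod>i<length w. real n / real (d j) * cmod (a (w ! i) j))"
      by (rule prod.cong[OF refl], rule cmod_scal[OF _ j], use w_letters in auto)
    also have "\<dots> = (real n / real (d j)) ^ length w * cmod (\<Prod>i<length w. a (w ! i) j)"
      by (simp only: prod.distrib prod_constant card_lessThan prod_norm)
    finally have "(cmod (sA j))\<^sup>2 = (real n / real (d j)) ^ (2 * length w) * (cmod (\<Prod>i<length w. a (w ! i) j))\<^sup>2"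
      by (simp add: power_mult_distrib power_mult[symmetric] mult.commute)
    thus ?thesis unfolding n_def by simp
  qed
  define S where "S = {j. j < k \<and> \<not> iso_rep G (\<rho> j) (d j) triv_rep 1}"
  have "(\<Sum>j<k. real (mult j) * real (d j) * (cmod (sA j))\<^sup>2) = (\<Sum>j\<in>S. real (mult j) * real (d j) * (cmod (sA j))\<^sup>2)"
    by (rule sum.mono_neutral_right, auto simp: S_def sA_triv)
  also have "\<dots> = (\<Sum>j\<in>S. real (mult j) * real (d j) * (real (order G) / real (d j)) ^ (2 * length w)
               * (cmod (\<Prod>i<length w. a (w ! i) j))\<^sup>2)"
    by (rule sum.cong[OF refl], auto simp: S_def sA_nt)
  finally have fin_eq: "(\<Sum>x\<in>X. \<Sum>y\<in>X. (Tr x y)\<^sup>2) = (\<Sum>j\<in>S. real (mult j) * real (d j) * (real (order G) / real (d j)) ^ (2 * length w)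
               * (cmod (\<Prod>i<length w. a (w ! i) j))\<^sup>2)" using keyeq by simp
  show ?thesis using LHS unfolding fin_eq S_def .
qed


end
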